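(* Consider the diploid population model of the context with environment (A), and suppose $1\le\alpha<2$, $\liminf_{N\to\infty}\zeta(N)/N>0$, and $\varepsilon_N=cN^{\alpha-2}(\mathbf 1\{\kappa>2\}+\mathbf 1\{\kappa=2\}\log N)$ for a fixed $c>0$. Then $$\lim_{N\to\infty}\frac{N^2}{c_N}\,\mathbb E\Big[\frac{X_1(X_1-1)X_2(X_2-1)}{S_N^4}\mathbf 1\{S_N\ge2N\}\Big]=0.$$
   Context: Population of $2N$ diploid individuals; each generation they form $N$ uniformly random parent pairs, pair $i$ produces $X_i$ diploid potential offspring (one gene copy from each parent, chosen uniformly from that parent's two copies), $S_N=X_1+\dots+X_N$; if $S_N\ge2N$, $2N$ potential offspring are sampled uniformly without replacement to survive, otherwise the population is unchanged; generations are independent. Environment (A): fix $0<\alpha<2\le\kappa$; with probability $\varepsilon_N\in(0,1)$ all $X_i$ are i.i.d. with law $\mathbb L(\alpha,\zeta(N))$, otherwise i.i.d. with law $\mathbb L(\kappa,\zeta(N))$. Here $X\vartriangleright\mathbb L(a,\zeta(N))$ means $\mathbb P(X\le\zeta(N))=1$, remaining mass outside $\{2,\dots,\zeta(N)\}$ on $\{0,1\}$, and $g_a(k)(k^{-a}-(1+k)^{-a})\le\mathbb P(X=k)\le f_a(k)(k^{-a}-(1+k)^{-a})$ for $2\le k\le\zeta(N)$, with $g_a\le f_a$ bounded positive functions, $\inf_k\sup_{i\ge k}f_a(i)<\infty$, $\sup_k\inf_{i\ge k}g_a(i)>0$, limits $\lim_kf_a(k),\lim_kg_a(k)$ existing and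 positive; $\mathbb E[X]>2$ is assumed. $c_N=\mathbb E[\nu_1(\nu_1-1)]/(8(2N-1))$ where $\nu_1$ is the number of surviving offspring of pair 1. *)

theory Defs
  imports "HOL-Probability.Probability" "HOL-Library.Liminf_Limsup"
begin

definition admissible_bounds :: "(nat \<Rightarrow> real) \<Rightarrow> (nat \<Rightarrow> real) \<Rightarrow> bool" where
  "admissible_bounds g f \<longleftrightarrow>
     (\<forall>k. 0 < g k \<and> g k \<le> f k) \<and> (\<exists>B. \<forall>k. f k \<le> B) \<and>
     limsup (\<lambda>k. ereal (f k)) < \<infinity> \<and> liminf (\<lambda>k. ereal (g k)) > 0 \<and>
     (\<exists>l. (f \<longlongrightarrow> l) sequentially \<and> l > 0) \<and>
     (\<exists>l. (g \<longlongrightarrow> l) sequentially \<and> l > 0)"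

definition in_class_L :: "nat pmf \<Rightarrow> real \<Rightarrow> nat \<Rightarrow> (nat \<Rightarrow> real) \<Rightarrow> (nat \<Rightarrow> real) \<Rightarrow> bool" where
  "in_class_L p a z g f \<longleftrightarrow>
     (\<forall>k. z < k \<longrightarrow> pmf p k = 0) \<and>
     (\<forall>k. 2 \<le> k \<and> k \<le> z \<longrightarrow>
        g k * (real k powr (-a) - real (k+1) powr (-a)) \<le> pmf p k \<and>
        pmf p k \<le> f k * (real k powr (-a) - real (k+1) powr (-a)))"

text \<open>Joint law of (X_1,...,X_N) (indexed 0..N-1) in environment (A):
  with probability eps all X_i i.i.d. with law p_alpha, otherwise i.i.d. with law p_kappa.\<close>
definition envA_law :: "nat \<Rightarrow> real \<Rightarrow> nat pmf \<Rightarrow> nat pmf \<Rightarrow> (nat \<Rightarrow> nat) pmf" where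
  "envA_law N eps pa pk =
     bind_pmf (bernoulli_pmf eps) (\<lambda>b. Pi_pmf {..<N} 0 (\<lambda>_. if b then pa else pk))"

definition S_tot :: "nat \<Rightarrow> (nat \<Rightarrow> nat) \<Rightarrow> nat" where
  "S_tot N x = (\<Sum>i<N. x i)"

text \<open>Conditional expectation of nu_1(nu_1 - 1) given the potential offspring numbers x:
  if S_N \<ge> 2N, nu_1 is hypergeometric (2N drawn without replacement from S_N, of which
  x 0 belong to pair 1); otherwise no sampling takes place and we set it to 0.\<close>
definition nu1_fact2 :: "nat \<Rightarrow> (nat \<Rightarrow> nat) \<Rightarrow> real" where
  "nu1_fact2 N x =
     (if 2*N \<le> S_tot N x then
        (\<Sum>k\<le>2*N. real k * (real k - 1) *
           real (x 0 choose k) * real ((S_tot N x - x 0) choose (2*N - k))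
           / real (S_tot N x choose (2*N)))
      else 0)"

definition coal_cN :: "nat \<Rightarrow> (nat \<Rightarrow> nat) pmf \<Rightarrow> real" where
  "coal_cN N P = measure_pmf.expectation P (nu1_fact2 N) / (8 * (2 * real N - 1))"

end

theory Submission
  imports Defs
begin

abbreviation E :: "'a pmf \<Rightarrow> ('a \<Rightarrow> real) \<Rightarrow> real" where
  "E M f \<equiv> measure_pmf.expectation M f"

lemma finite_set_Pi_pmf:
  assumes "finite I" "\<And>i. finite (set_pmf (p i))"
  shows "finite (set_pmf (Pi_pmf I d p))"
  using assms by (subst set_Pi_pmf) auto

lemma E_mono_fin:
  assumes "finite (set_pmf M)" "\<And>x. x \<in> set_pmf M \<Longrightarrow> f x \<le> g x"
  shows "E M f \<le> E M g"
  using assms by (intro integral_mono_AE integrable_measure_pmf_finite AE_pmfI) auto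

lemma E_nonneg_fin:
  assumes "\<And>x. x \<in> set_pmf M \<Longrightarrow> 0 \<le> f x"
  shows "0 \<le> E M f"
  using assms by (intro integral_nonneg_AE AE_pmfI) auto

lemma E_pair_fin:
  fixes f :: "'a \<times> 'b \<Rightarrow> real"
  assumes A: "finite (set_pmf A)" and B: "finite (set_pmf B)"
  shows "E (pair_pmf A B) f = E A (\<lambda>a. E B (\<lambda>b. f (a,b)))"
proof -
  have "E (pair_pmf A B) f = (\<Sum>a\<in>set_pmf A. pmf A a *\<^sub>R E (bind_pmf B (\<lambda>y. return_pmf (a, y))) f)"
    unfolding pair_pmf_def using A B by (intro pmf_expectation_bind) auto
  also have "\<dots> = (\<Sum>a\<in>set_pmf A. pmf A a *\<^sub>R E B (\<lambda>b. f (a,b)))"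
  proof (intro sum.cong refl)
    fix a assume "a \<in> set_pmf A"
    have "E (bind_pmf B (\<lambda>y. return_pmf (a, y))) f = (\<Sum>b\<in>set_pmf B. pmf B b *\<^sub>R E (return_pmf (a, b)) f)"
      using B by (intro pmf_expectation_bind) auto
    also have "\<dots> = E B (\<lambda>b. f (a,b))"
      using B by (subst integral_measure_pmf[of "set_pmf B"]) auto
    finally show "pmf A a *\<^sub>R E (bind_pmf B (\<lambda>y. return_pmf (a, y))) f = pmf A a *\<^sub>R E B (\<lambda>b. f (a,b))" by simp
  qed
  also have "\<dots> = E A (\<lambda>a. E B (\<lambda>b. f (a,b)))"
    using A by (subst integral_measure_pmf[of "set_pmf A"]) auto
  finally show ?thesis .
qed

lemma E_Pi_insert:
  fixes F :: "('i \<Rightarrow> 'b) \<Rightarrow> real"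
  assumes "finite I" "j \<notin> I" "\<And>i. finite (set_pmf (p i))"
  shows "E (Pi_pmf (insert j I) d p) F = E (p j) (\<lambda>a. E (Pi_pmf I d p) (\<lambda>y. F (y(j:=a))))"
proof -
  have "E (Pi_pmf (insert j I) d p) F = E (pair_pmf (p j) (Pi_pmf I d p)) (\<lambda>(y,f). F (f(j:=y)))"
    using assms by (subst Pi_pmf_insert) (auto simp: case_prod_unfold)
  also have "\<dots> = E (p j) (\<lambda>a. E (Pi_pmf I d p) (\<lambda>y. F (y(j:=a))))"
    using assms by (subst E_pair_fin) (auto intro!: finite_set_Pi_pmf)
  finally show ?thesis .
qed

lemma E_pmf_point:
  assumes "\<And>x. x \<in> set_pmf M \<Longrightarrow> 0 \<le> f x" "finite (set_pmf M)"
  shows "pmf M k * f k \<le> E M f"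
proof -
  have "E M f = (\<Sum>a\<in>set_pmf M. pmf M a * f a)"
    using assms by (subst integral_measure_pmf[of "set_pmf M"]) auto
  also have "\<dots> \<ge> (\<Sum>a\<in>set_pmf M \<inter> {k}. pmf M a * f a)"
    using assms by (intro sum_mono2) (auto intro!: mult_nonneg_nonneg)
  finally show ?thesis
    by (cases "k \<in> set_pmf M") (auto simp: set_pmf_eq)
qed

lemma E_envA:
  assumes "0 \<le> e" "e \<le> 1" "finite (set_pmf pa)" "finite (set_pmf pk)"
  shows "E (envA_law N e pa pk) F = e * E (Pi_pmf {..<N} 0 (\<lambda>_. pa)) F + (1 - e) * E (Pi_pmf {..<N} 0 (\<lambda>_. pk)) F"
proof -
  have "E (envA_law N e pa pk) F = (\<Sum>b\<in>UNIV. pmf (bernoulli_pmf e) b *\<^sub>R E (Pi_pmf {..<N} 0 (\<lambda>_. if b then pa else pk)) F)"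
    unfolding envA_law_def using assms
    by (intro pmf_expectation_bind) (auto intro!: finite_set_Pi_pmf)
  also have "\<dots> = e * E (Pi_pmf {..<N} 0 (\<lambda>_. pa)) F + (1 - e) * E (Pi_pmf {..<N} 0 (\<lambda>_. pk)) F"
    using assms by (simp add: UNIV_bool)
  finally show ?thesis .
qed


lemma adm_g0:
  assumes "admissible_bounds g f"
  shows "\<exists>g0>0. \<forall>k. g0 \<le> g k"
proof -
  from assms obtain l where l: "(g \<longlongrightarrow> l) sequentially" "l > 0" and gpos: "\<forall>k. 0 < g k"
    unfolding admissible_bounds_def by auto
  have "eventually (\<lambda>k. g k > l/2) sequentially"
    using order_tendstoD(1)[OF l(1), of "l/2"] l(2) by auto
  then obtain K where K: "\<And>k. k \<ge> K \<Longrightarrow> g k > l/2" by (auto simp: eventually_sequentially)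
  define g0 where "g0 = min (l/2) (Min (g ` {..K}))"
  have "0 < Min (g ` {..K})" using gpos by (subst Min_gr_iff) auto
  hence "g0 > 0" unfolding g0_def using l(2) by simp
  moreover have "g0 \<le> g k" for k
  proof (cases "k \<le> K")
    case True thus ?thesis unfolding g0_def by (intro min.coboundedI2 Min_le) auto
  next
    case False thus ?thesis unfolding g0_def using K[of k] by linarith
  qed
  ultimately show ?thesis by blast
qed

lemma adm_B:
  assumes "admissible_bounds g f"
  shows "\<exists>B>0. \<forall>k. f k \<le> B \<and> 0 < g k \<and> g k \<le> f k"
proof -
  from assms obtain B where "\<forall>k. f k \<le> B" "\<forall>k. 0 < g k \<and> g k \<le> f k"
    unfolding admissible_bounds_def by auto
  hence "\<forall>k. f k \<le> max B 1 \<and> 0 < g k \<and> g k \<le> f k" by (meson max.coboundedI1)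
  thus ?thesis by (intro exI[of _ "max B 1"]) auto
qed

lemma class_support:
  assumes "in_class_L p a z g f"
  shows "set_pmf p \<subseteq> {..z}"
proof
  fix x assume "x \<in> set_pmf p"
  hence "pmf p x \<noteq> 0" by (simp add: set_pmf_eq)
  with assms show "x \<in> {..z}" unfolding in_class_L_def by (meson atMost_iff leI)
qed

lemma class_fin: "in_class_L p a z g f \<Longrightarrow> finite (set_pmf p)"
  by (rule finite_subset[OF class_support]) auto

lemma E_class_sum:
  assumes "in_class_L p a z g f"
  shows "E p h = (\<Sum>k\<le>z. pmf p k * h k)"
  using class_support[OF assms] by (subst integral_measure_pmf[of "{..z}"]) auto


definition Zs :: "real \<Rightarrow> real" where "Zs r = (\<Sum>n. real n powr (-r))"

lemma pw_dec:
  assumes "0 < a" "1 \<le> k"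
  shows "0 \<le> real k powr (-a) - real (k+1) powr (-a)"
  using assms by (auto intro!: powr_mono2')

lemma pw_mvt:
  assumes "0 < a" "1 \<le> k"
  shows "real k powr (-a) - real (k+1) powr (-a) \<le> a * real k powr (-a-1)"
proof -
  define F where "F = (\<lambda>x::real. - (x powr (-a)))"
  have "\<And>x. real k \<le> x \<Longrightarrow> x \<le> real (k+1) \<Longrightarrow> (F has_real_derivative a * x powr (-a-1)) (at x)"
  proof -
    fix x :: real assume "real k \<le> x"
    hence "x > 0" using assms by auto
    from has_real_derivative_powr[OF this, of "-a"]
    have "((\<lambda>z. z powr (-a)) has_real_derivative (-a) * x powr (-a-1)) (at x)" by simp
    from DERIV_minus[OF this] show "(F has_real_derivative a * x powr (-a-1)) (at x)"
      unfolding F_def by simp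
  qed
  from MVT2[of "real k" "real (k+1)" F, OF _ this]
  obtain y where y: "real k < y" "y < real (k+1)" "F (real (k+1)) - F (real k) = (real (k+1) - real k) * (a * y powr (-a-1))"
    by auto
  have "y powr (-a-1) \<le> real k powr (-a-1)"
    using assms y by (intro powr_mono2') auto
  hence "F (real (k+1)) - F (real k) \<le> a * real k powr (-a-1)"
    using y assms by simp
  thus ?thesis unfolding F_def by simp
qed

locale cls =
  fixes p :: "nat pmf" and a :: real and z :: nat and g f :: "nat \<Rightarrow> real" and B g0 :: real
  assumes inC: "in_class_L p a z g f" and a_pos: "0 < a"
    and fB: "\<And>k. f k \<le> B" and gf: "\<And>k. g k \<le> f k" and g0g: "\<And>k. g0 \<le> g k"
    and B_pos: "0 < B" and g0_pos: "0 < g0"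
begin

lemma fin: "finite (set_pmf p)" using class_fin[OF inC] .

lemma Esum: "E p h = (\<Sum>k\<le>z. pmf p k * h k)" using E_class_sum[OF inC] .

lemma pmf_zero: "z < k \<Longrightarrow> pmf p k = 0" using inC unfolding in_class_L_def by auto

lemma upper:
  assumes "2 \<le> k"
  shows "pmf p k \<le> B * (real k powr (-a) - real (k+1) powr (-a))"
proof (cases "k \<le> z")
  case True
  have d: "real k powr (-a) - real (k+1) powr (-a) \<ge> 0" using pw_dec[OF a_pos] assms by auto
  have "pmf p k \<le> f k * (real k powr (-a) - real (k+1) powr (-a))"
    using inC True assms unfolding in_class_L_def by auto
  also have "\<dots> \<le> B * (real k powr (-a) - real (k+1) powr (-a))"
    using d fB by (intro mult_right_mono) auto
  finally show ?thesis .
next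
  case False
  then show ?thesis using pmf_zero[of k] pw_dec[OF a_pos, of k] assms B_pos by auto
qed

lemma lower:
  assumes "2 \<le> k" "k \<le> z"
  shows "g0 * (real k powr (-a) - real (k+1) powr (-a)) \<le> pmf p k"
proof -
  have d: "real k powr (-a) - real (k+1) powr (-a) \<ge> 0" using pw_dec[OF a_pos] assms by auto
  have "g0 * (real k powr (-a) - real (k+1) powr (-a)) \<le> g k * (real k powr (-a) - real (k+1) powr (-a))"
    using d g0g by (intro mult_right_mono) auto
  also have "\<dots> \<le> pmf p k"
    using inC assms unfolding in_class_L_def by auto
  finally show ?thesis .
qed

lemma upper2:
  assumes "2 \<le> k"
  shows "pmf p k \<le> B * a * real k powr (-a-1)"
proof -
  have "pmf p k \<le> B * (real k powr (-a) - real (k+1) powr (-a))" using upper[OF assms] .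
  also have "\<dots> \<le> B * (a * real k powr (-a-1))"
    using pw_mvt[OF a_pos, of k] assms B_pos by (intro mult_left_mono) auto
  finally show ?thesis by simp
qed

lemma tail_sum:
  assumes "2 \<le> m"
  shows "(\<Sum>k\<in>{m..z}. pmf p k) \<le> B * real m powr (-a)"
proof (cases "m \<le> z")
  case True
  have "(\<Sum>k\<in>{m..z}. pmf p k) \<le> (\<Sum>k\<in>{m..z}. B * (real k powr (-a) - real (k+1) powr (-a)))"
    using assms by (intro sum_mono upper) auto
  also have "\<dots> = B * (\<Sum>k\<in>{m..z}. (real k powr (-a) - real (Suc k) powr (-a)))"
    by (simp add: sum_distrib_left)
  also have "(\<Sum>k\<in>{m..z}. (real k powr (-a) - real (Suc k) powr (-a))) = real m powr (-a) - real (Suc z) powr (-a)"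
    using sum_Suc_diff[of m z "\<lambda>k. - (real k powr (-a))"] True by simp
  also have "B * \<dots> \<le> B * real m powr (-a)" using B_pos by (intro mult_left_mono) auto
  finally show ?thesis .
next
  case False
  then show ?thesis using B_pos by simp
qed

lemma tail:
  assumes "2 \<le> m"
  shows "E p (\<lambda>k. if m \<le> k then 1 else 0) \<le> B * real m powr (-a)"
proof -
  have "E p (\<lambda>k. if m \<le> k then 1 else 0) = (\<Sum>k\<le>z. pmf p k * (if m \<le> k then 1 else 0))" by (rule Esum)
  also have "\<dots> = (\<Sum>k\<in>{m..z}. pmf p k)"
    by (rule sum.mono_neutral_cong_right) auto
  finally show ?thesis using tail_sum[OF assms] by simp
qed

lemma moment:
  assumes "0 \<le> s" "s < a"
  shows "E p (\<lambda>k. real k powr s) \<le> 2 + B * a * Zs (a + 1 - s)"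
proof -
  have summ: "summable (\<lambda>n. real n powr (-(a+1-s)))"
    using assms by (subst summable_real_powr_iff) auto
  have pt: "pmf p k * real k powr s \<le> (if k < 2 then 1 else 0) + B * a * real k powr (-(a+1-s))" for k
  proof (cases "k < 2")
    case True
    hence "real k powr s \<le> 1" by (cases k) (auto simp: less_Suc_eq)
    hence "pmf p k * real k powr s \<le> 1 * 1" by (intro mult_mono) (auto simp: pmf_le_1)
    moreover have "0 \<le> B * a * real k powr (-(a+1-s))" using B_pos a_pos by auto
    ultimately show ?thesis using True by simp
  next
    case False
    hence "pmf p k * real k powr s \<le> (B * a * real k powr (-a-1)) * real k powr s"
      by (intro mult_right_mono upper2) auto
    also have "\<dots> = B * a * real k powr (-(a+1-s))"
      using False by (simp add: powr_add[symmetric] algebra_simps)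
    finally show ?thesis using False by simp
  qed
  have "E p (\<lambda>k. real k powr s) = (\<Sum>k\<le>z. pmf p k * real k powr s)" by (rule Esum)
  also have "\<dots> \<le> (\<Sum>k\<le>z. (if k < 2 then 1 else 0) + B * a * real k powr (-(a+1-s)))"
    by (intro sum_mono pt)
  also have "\<dots> = (\<Sum>k\<le>z. (if k < 2 then 1 else 0)) + B * a * (\<Sum>k\<le>z. real k powr (-(a+1-s)))"
    by (simp add: sum.distrib sum_distrib_left)
  also have "(\<Sum>k\<le>z. (if k < 2 then 1 else 0::real)) \<le> 2"
  proof -
    have "{x. x \<le> z \<and> x < 2} \<subseteq> {0,1::nat}" by auto
    from card_mono[OF _ this] have "card {x. x \<le> z \<and> x < 2} \<le> 2" by simp
    thus ?thesis by (subst sum.inter_filter[symmetric]) auto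
  qed
  also have "(\<Sum>k\<le>z. real k powr (-(a+1-s))) \<le> Zs (a+1-s)"
    unfolding Zs_def by (intro sum_le_suminf summ) auto
  finally show ?thesis using B_pos a_pos by (simp add: mult_left_mono)
qed

end


definition hN :: "nat \<Rightarrow> (nat \<Rightarrow> nat) \<Rightarrow> real" where
  "hN N x = real (x 0) * (real (x 0) - 1) * real (x 1) * (real (x 1) - 1)
                    / real (S_tot N x) ^ 4
                    * (if 2 * N \<le> S_tot N x then 1 else 0)"

definition mm :: "nat \<Rightarrow> nat \<Rightarrow> real" where
  "mm k M = min 1 (real k / real M)"

definition phi :: "nat pmf \<Rightarrow> nat \<Rightarrow> real" where
  "phi q M = E q (\<lambda>k. mm k M ^ 2)"

lemma lessThan_split2: "2 \<le> (N::nat) \<Longrightarrow> {..<N} = insert 0 (insert 1 {2..<N})"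
  by auto

lemma E_swap:
  fixes f :: "'a \<Rightarrow> 'b \<Rightarrow> real"
  assumes A: "finite (set_pmf A)" and B: "finite (set_pmf B)"
  shows "E A (\<lambda>a. E B (\<lambda>b. f a b)) = E B (\<lambda>b. E A (\<lambda>a. f a b))"
proof -
  have "E A (\<lambda>a. E B (\<lambda>b. f a b)) = (\<Sum>a\<in>set_pmf A. pmf A a * (\<Sum>b\<in>set_pmf B. pmf B b * f a b))"
    using A B by (simp add: integral_measure_pmf[of "set_pmf A"] integral_measure_pmf[of "set_pmf B"])
  also have "\<dots> = (\<Sum>b\<in>set_pmf B. pmf B b * (\<Sum>a\<in>set_pmf A. pmf A a * f a b))"
    by (simp add: sum_distrib_left mult.left_commute sum.swap[of _ "set_pmf A"])
  also have "\<dots> = E B (\<lambda>b. E A (\<lambda>a. f a b))"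
    using A B by (simp add: integral_measure_pmf[of "set_pmf A"] integral_measure_pmf[of "set_pmf B"])
  finally show ?thesis .
qed

lemma S_split:
  assumes "2 \<le> N"
  shows "S_tot N ((y(1:=b))(0:=a)) = a + b + (\<Sum>i\<in>{2..<N}. y i)"
proof -
  have "S_tot N ((y(1:=b))(0:=a)) = (\<Sum>i\<in>insert 0 (insert 1 {2..<N}). ((y(1:=b))(0:=a)) i)"
    unfolding S_tot_def using lessThan_split2[OF assms] by simp
  also have "\<dots> = a + b + (\<Sum>i\<in>{2..<N}. ((y(1:=b))(0:=a)) i)" by simp
  also have "(\<Sum>i\<in>{2..<N}. ((y(1:=b))(0:=a)) i) = (\<Sum>i\<in>{2..<N}. y i)" by (intro sum.cong) auto
  finally show ?thesis .
qed

lemma split2: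
  fixes F :: "(nat \<Rightarrow> nat) \<Rightarrow> real"
  assumes "2 \<le> N" "finite (set_pmf q)"
  shows "E (Pi_pmf {..<N} 0 (\<lambda>_. q)) F =
    E q (\<lambda>a. E q (\<lambda>b. E (Pi_pmf {2..<N} 0 (\<lambda>_. q)) (\<lambda>y. F ((y(1:=b))(0:=a)))))"
proof -
  have "E (Pi_pmf {..<N} 0 (\<lambda>_. q)) F = E (Pi_pmf (insert 0 (insert 1 {2..<N})) 0 (\<lambda>_. q)) F"
    using lessThan_split2[OF assms(1)] by simp
  also have "\<dots> = E q (\<lambda>a. E (Pi_pmf (insert 1 {2..<N}) 0 (\<lambda>_. q)) (\<lambda>y. F (y(0:=a))))"
    using assms by (subst E_Pi_insert) auto
  also have "\<dots> = E q (\<lambda>a. E q (\<lambda>b. E (Pi_pmf {2..<N} 0 (\<lambda>_. q)) (\<lambda>y. F ((y(1:=b))(0:=a)))))"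
    using assms by (subst E_Pi_insert) auto
  finally show ?thesis .
qed

lemma mm_nonneg: "0 \<le> mm k M" unfolding mm_def by auto
lemma mm_le1: "mm k M \<le> 1" unfolding mm_def by auto

lemma hN_bound:
  assumes "2 \<le> N"
  shows "hN N ((y(1:=b))(0:=a)) \<le> mm a (max (2*N) (\<Sum>i\<in>{2..<N}. y i))^2 * mm b (max (2*N) (\<Sum>i\<in>{2..<N}. y i))^2"
proof -
  define R where "R = (\<Sum>i\<in>{2..<N}. y i)"
  define M where "M = max (2*N) R"
  define S where "S = a + b + R"
  have S: "S_tot N ((y(1:=b))(0:=a)) = S" using S_split[OF assms] unfolding S_def R_def by simp
  have rhs: "0 \<le> mm a M ^ 2 * mm b M ^ 2" by simp
  show ?thesis
  proof (cases "2 * N \<le> S")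
    case False
    thus ?thesis using rhs unfolding hN_def S M_def R_def by simp
  next
    case True
    have MS: "M \<le> S" "0 < M" unfolding M_def using True assms S_def by auto
    have key: "real u * (real u - 1) / real S ^ 2 \<le> mm u M ^ 2" if "u \<le> S" for u
    proof -
      have "real u * (real u - 1) / real S ^ 2 \<le> (real u / real S)^2"
      proof -
        have "real u * (real u - 1) \<le> real u * real u" by (intro mult_left_mono) auto
        hence "real u * (real u - 1) / real S ^ 2 \<le> real u * real u / real S ^ 2"
          by (intro divide_right_mono) auto
        thus ?thesis by (simp add: power2_eq_square)
      qed
      also have "real u / real S \<le> mm u M"
      proof -
        have "real u / real S \<le> 1" using that MS by auto
        moreover have "real u / real S \<le> real u / real M" using MS by (intro divide_left_mono) auto
        ultimately show ?thesis unfolding mm_def by simp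
      qed
      hence "(real u / real S)^2 \<le> mm u M ^ 2" by (intro power_mono) auto
      finally show ?thesis .
    qed
    have nn: "0 \<le> real u * (real u - 1) / real S ^ 2" for u
    proof -
      have "0 \<le> real u * (real u - 1)" by (cases u) auto
      thus ?thesis by simp
    qed
    have "hN N ((y(1:=b))(0:=a)) = (real a * (real a - 1) / real S ^ 2) * (real b * (real b - 1) / real S ^ 2)"
      unfolding hN_def S using True by (simp add: power2_eq_square power4_eq_xxxx field_simps)
    also have "\<dots> \<le> mm a M ^ 2 * mm b M ^ 2"
      using key[of a] key[of b] nn[of a] nn[of b] unfolding S_def by (intro mult_mono) auto
    finally show ?thesis unfolding M_def R_def .
  qed
qed

lemma E_hN_bound:
  assumes "2 \<le> N" "finite (set_pmf q)"
  shows "E (Pi_pmf {..<N} 0 (\<lambda>_. q)) (hN N) \<le>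
     E (Pi_pmf {2..<N} 0 (\<lambda>_. q)) (\<lambda>y. phi q (max (2*N) (\<Sum>i\<in>{2..<N}. y i)) ^ 2)"
proof -
  let ?P = "Pi_pmf {2..<N} 0 (\<lambda>_. q)"
  let ?M = "\<lambda>y. max (2*N) (\<Sum>i\<in>{2..<N}. y i)"
  have finP: "finite (set_pmf ?P)" using assms by (intro finite_set_Pi_pmf) auto
  have "E (Pi_pmf {..<N} 0 (\<lambda>_. q)) (hN N) = E q (\<lambda>a. E q (\<lambda>b. E ?P (\<lambda>y. hN N ((y(1:=b))(0:=a)))))"
    using split2[OF assms] .
  also have "\<dots> \<le> E q (\<lambda>a. E q (\<lambda>b. E ?P (\<lambda>y. mm a (?M y)^2 * mm b (?M y)^2)))"
    using assms finP by (intro E_mono_fin hN_bound) auto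
  also have "\<dots> = E ?P (\<lambda>y. E q (\<lambda>a. E q (\<lambda>b. mm a (?M y)^2 * mm b (?M y)^2)))"
    using assms finP by (simp add: E_swap[of q ?P])
  also have "\<dots> = E ?P (\<lambda>y. phi q (?M y) ^ 2)"
    unfolding phi_def by (simp add: power2_eq_square)
  finally show ?thesis .
qed


lemma mm_mono: assumes "0 < M0" "M0 \<le> M" shows "mm k M \<le> mm k M0"
proof -
  have "real k / real M \<le> real k / real M0" using assms by (intro divide_left_mono) auto
  thus ?thesis unfolding mm_def by (meson min.mono order_refl)
qed

lemma phi_mono:
  assumes "finite (set_pmf q)" "0 < M0" "M0 \<le> M"
  shows "phi q M \<le> phi q M0"
  unfolding phi_def using assms mm_mono mm_nonneg
  by (intro E_mono_fin power_mono) auto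

lemma phi_nonneg: "0 \<le> phi q M"
  unfolding phi_def by (intro E_nonneg_fin) auto

lemma min_sq_powr:
  fixes t s :: real assumes "0 \<le> t" "0 \<le> s" "s \<le> 2"
  shows "(min 1 t)^2 \<le> t powr s"
proof (cases "t \<le> 1")
  case True
  show ?thesis
  proof (cases "t = 0")
    case False
    hence "t powr 2 \<le> t powr s" using True assms by (intro powr_mono') auto
    thus ?thesis using True assms False by (simp add: powr_numeral)
  qed (simp)
next
  case False
  hence "1 \<le> t powr s" using assms by (intro ge_one_powr_ge_zero) auto
  thus ?thesis using False by simp
qed

lemma phi_powr:
  assumes "finite (set_pmf q)" "0 < M" "0 \<le> s" "s \<le> 2"
  shows "phi q M \<le> real M powr (-s) * E q (\<lambda>k. real k powr s)"
proof -
  have "phi q M \<le> E q (\<lambda>k. real M powr (-s) * real k powr s)"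
    unfolding phi_def
  proof (intro E_mono_fin assms)
    fix k
    have "mm k M ^ 2 \<le> (real k / real M) powr s"
      unfolding mm_def using assms by (intro min_sq_powr) auto
    also have "\<dots> = real M powr (-s) * real k powr s"
    proof -
      have "(real k / real M) powr s = real k powr s / real M powr s" by (simp add: powr_divide)
      moreover have "real M powr (-s) = 1 / real M powr s" by (simp add: powr_minus_divide)
      ultimately show ?thesis by simp
    qed
    finally show "mm k M ^ 2 \<le> real M powr (-s) * real k powr s" .
  qed
  also have "\<dots> = real M powr (-s) * E q (\<lambda>k. real k powr s)" by simp
  finally show ?thesis .
qed

lemma harm_ln: "ln ((real K + 2) / 3) \<le> (\<Sum>k\<in>{2..K}. 1 / (real k + 1))"
proof (induction K)
  case 0 thus ?case by simp
next
  case (Suc K)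
  show ?case
  proof (cases "K = 0")
    case True thus ?thesis by simp
  next
    case False
    have "ln ((real (Suc K) + 2) / 3) = ln ((real K + 2) / 3) + ln (1 + 1 / (real K + 2))"
    proof -
      have eq: "(real (Suc K) + 2)/3 = ((real K + 2)/3) * (1 + 1/(real K + 2))" by (simp add: field_simps)
      have "ln (((real K + 2)/3) * (1 + 1/(real K + 2))) = ln ((real K + 2)/3) + ln (1 + 1/(real K + 2))"
        by (rule ln_mult_pos) (auto simp: add_pos_pos)
      thus ?thesis using eq by metis
    qed
    also have "ln (1 + 1 / (real K + 2)) \<le> 1 / (real K + 2)"
      by (intro ln_add_one_self_le_self) auto
    also have "ln ((real K + 2) / 3) \<le> (\<Sum>k\<in>{2..K}. 1 / (real k + 1))" by (rule Suc.IH)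
    also have "(\<Sum>k\<in>{2..K}. 1 / (real k + 1)) + 1 / (real K + 2) = (\<Sum>k\<in>{2..Suc K}. 1 / (real k + 1))"
      using False by (simp add: sum.cl_ivl_Suc add_ac)
    finally show ?thesis by simp
  qed
qed


context cls begin

lemma upper_a1:
  assumes "a = 1" "2 \<le> k"
  shows "pmf p k \<le> B / (real k)^2"
proof -
  have "pmf p k \<le> B * (real k powr (-a) - real (k+1) powr (-a))" using upper[OF assms(2)] .
  also have "real k powr (-a) - real (k+1) powr (-a) = 1 / real k - 1 / (real k + 1)"
    using assms by (simp add: powr_minus_divide)
  also have "\<dots> = 1 / (real k * (real k + 1))" using assms by (simp add: field_simps)
  also have "\<dots> \<le> 1 / (real k * real k)" using assms by (intro divide_left_mono mult_left_mono mult_pos_pos) auto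
  also have "\<dots> = 1 / (real k)^2" by (simp add: power2_eq_square)
  finally show ?thesis using B_pos by (simp add: mult_left_mono divide_inverse)
qed

lemma phi_a1:
  assumes "a = 1" "1 \<le> M"
  shows "phi p M \<le> (3 * B + 2) / real M"
proof -
  have pt: "pmf p k * mm k M ^ 2 \<le> (if k \<le> M then (B + 1) / (real M)^2 else 0) + (if M < k then pmf p k else 0)" for k
  proof (cases "k \<le> M")
    case True
    hence mmk: "mm k M = real k / real M" unfolding mm_def using assms by auto
    show ?thesis
    proof (cases "k < 2")
      case True
      hence "pmf p k * (real k / real M)^2 \<le> 1 * (1 / real M)^2"
        using assms by (intro mult_mono power_mono divide_right_mono) (auto simp: pmf_le_1)
      moreover have "1 / (real M)^2 \<le> (B + 1) / (real M)^2" using B_pos by (intro divide_right_mono) auto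
      ultimately show ?thesis using mmk \<open>k \<le> M\<close> by (simp add: power_divide)
    next
      case False
      have "pmf p k * (real k / real M)^2 \<le> (B / (real k)^2) * (real k / real M)^2"
        using upper_a1[OF assms(1)] False by (intro mult_right_mono) auto
      also have "\<dots> = B / (real M)^2" using False by (simp add: power_divide)
      also have "B / (real M)^2 \<le> (B + 1) / (real M)^2" by (intro divide_right_mono) auto
      finally show ?thesis using mmk \<open>k \<le> M\<close> by simp
    qed
  next
    case False
    have "pmf p k * mm k M ^ 2 \<le> pmf p k * 1"
      using mm_nonneg[of k M] mm_le1[of k M] by (intro mult_left_mono) (auto simp: power_le_one)
    thus ?thesis using False by simp
  qed
  have "phi p M = (\<Sum>k\<le>z. pmf p k * mm k M ^ 2)" unfolding phi_def by (rule Esum)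
  also have "\<dots> \<le> (\<Sum>k\<le>z. (if k \<le> M then (B + 1) / (real M)^2 else 0) + (if M < k then pmf p k else 0))"
    by (intro sum_mono pt)
  also have "\<dots> = (\<Sum>k\<le>z. (if k \<le> M then (B + 1) / (real M)^2 else 0)) + (\<Sum>k\<le>z. (if M < k then pmf p k else 0))"
    by (rule sum.distrib)
  also have "(\<Sum>k\<le>z. (if k \<le> M then (B + 1) / (real M)^2 else 0)) \<le> (\<Sum>k\<le>M. (B + 1) / (real M)^2)"
  proof -
    have "(\<Sum>k\<le>z. (if k \<le> M then (B + 1) / (real M)^2 else 0)) = (\<Sum>k\<in>{..z} \<inter> {..M}. (B + 1) / (real M)^2)"
      by (subst sum.inter_restrict) auto
    also have "\<dots> \<le> (\<Sum>k\<le>M. (B + 1) / (real M)^2)"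
      using B_pos by (intro sum_mono2) auto
    finally show ?thesis .
  qed
  also have "(\<Sum>k\<le>M. (B + 1) / (real M)^2) = (real M + 1) * (B + 1) / (real M)^2" by simp
  also have "(\<Sum>k\<le>z. (if M < k then pmf p k else 0)) = (\<Sum>k\<in>{Suc M..z}. pmf p k)"
    by (rule sum.mono_neutral_cong_right) auto
  also have "\<dots> \<le> B * real (Suc M) powr (-a)" using assms by (intro tail_sum) auto
  also have "B * real (Suc M) powr (-a) \<le> B / real M"
    using assms B_pos by (simp add: powr_minus_divide divide_left_mono)
  also have "(real M + 1) * (B + 1) / (real M)^2 \<le> 2 * (B + 1) / real M"
  proof -
    have "(real M + 1) * (B + 1) \<le> (2 * real M) * (B + 1)" using assms B_pos by (intro mult_right_mono) auto
    hence "(real M + 1) * (B + 1) / (real M)^2 \<le> (2 * real M) * (B + 1) / (real M)^2"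
      by (intro divide_right_mono) auto
    thus ?thesis using assms by (simp add: power2_eq_square)
  qed
  finally have "phi p M \<le> B / real M + 2 * (B + 1) / real M" by simp
  also have "\<dots> = (3 * B + 2) / real M" by (simp add: add_divide_distrib[symmetric] algebra_simps)
  finally show ?thesis .
qed

lemma exp_bound_a1:
  assumes "a = 1" "1 \<le> N"
  shows "E p (\<lambda>k. exp (- real k / real N)) \<le> exp (- (g0 / (2 * real N)) * ln ((real (min N z) + 2) / 3))"
proof -
  define K where "K = min N z"
  have lowexp: "(if 2 \<le> k \<and> k \<le> K then real k / (2 * real N) else 0) \<le> 1 - exp (- real k / real N)" for k
  proof (cases "2 \<le> k \<and> k \<le> K")
    case True
    define y where "y = real k / real N"
    have y: "0 \<le> y" "y \<le> 1" unfolding y_def using True assms by (auto simp: K_def)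
    have "exp y \<ge> 1 + y" by (rule exp_ge_add_one_self)
    hence "exp (-y) \<le> 1 / (1 + y)" using y by (simp add: exp_minus field_simps)
    also have "1 / (1 + y) \<le> 1 - y / 2"
    proof -
      have "y * y \<le> 1 * y" using y by (intro mult_right_mono) auto
      hence "1 \<le> (1 - y / 2) * (1 + y)" by (simp add: algebra_simps)
      thus ?thesis using y by (simp add: divide_le_eq)
    qed
    finally have "y / 2 \<le> 1 - exp (-y)" by simp
    thus ?thesis using True unfolding y_def by simp
  qed auto
  have "E p (\<lambda>k. if 2 \<le> k \<and> k \<le> K then real k / (2 * real N) else 0) \<le> E p (\<lambda>k. 1 - exp (- real k / real N))"
    using fin by (intro E_mono_fin lowexp)
  also have "\<dots> = 1 - E p (\<lambda>k. exp (- real k / real N))"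
    using fin by (simp add: Bochner_Integration.integral_diff integrable_measure_pmf_finite)
  finally have A: "E p (\<lambda>k. exp (- real k / real N)) \<le> 1 - E p (\<lambda>k. if 2 \<le> k \<and> k \<le> K then real k / (2 * real N) else 0)"
    by simp
  have "E p (\<lambda>k. if 2 \<le> k \<and> k \<le> K then real k / (2 * real N) else 0) = (\<Sum>k\<le>z. pmf p k * (if 2 \<le> k \<and> k \<le> K then real k / (2 * real N) else 0))"
    by (rule Esum)
  also have "\<dots> = (\<Sum>k\<in>{2..K}. pmf p k * (real k / (2 * real N)))"
    by (rule sum.mono_neutral_cong_right) (auto simp: K_def)
  also have "\<dots> \<ge> (\<Sum>k\<in>{2..K}. g0 / (2 * real N) * (1 / (real k + 1)))"
  proof (intro sum_mono)
    fix k assume k: "k \<in> {2..K}"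
    have "g0 * (real k powr (-a) - real (k+1) powr (-a)) \<le> pmf p k"
      using k by (intro lower) (auto simp: K_def)
    also have "real k powr (-a) - real (k+1) powr (-a) = 1 / (real k * (real k + 1))"
      using assms k by (simp add: powr_minus_divide field_simps)
    finally have "g0 / (real k * (real k + 1)) \<le> pmf p k" by simp
    hence "g0 / (real k * (real k + 1)) * (real k / (2 * real N)) \<le> pmf p k * (real k / (2 * real N))"
      by (intro mult_right_mono) auto
    moreover have "g0 / (real k * (real k + 1)) * (real k / (2 * real N)) = g0 / (2 * real N) * (1 / (real k + 1))"
    proof -
      have "g0 / (real k * (real k + 1)) * (real k / (2 * real N)) = (real k * g0) / (real k * ((real k + 1) * (2 * real N)))"
        by (simp add: ac_simps)
      also have "\<dots> = g0 / ((real k + 1) * (2 * real N))"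
        using k by (intro mult_divide_mult_cancel_left) auto
      finally show ?thesis by simp
    qed
    ultimately show "g0 / (2 * real N) * (1 / (real k + 1)) \<le> pmf p k * (real k / (2 * real N))"
      by simp
  qed
  finally have B: "g0 / (2 * real N) * (\<Sum>k\<in>{2..K}. (1 / (real k + 1))) \<le> E p (\<lambda>k. if 2 \<le> k \<and> k \<le> K then real k / (2 * real N) else 0)"
    by (simp add: sum_distrib_left)
  have C: "g0 / (2 * real N) * ln ((real K + 2) / 3) \<le> g0 / (2 * real N) * (\<Sum>k\<in>{2..K}. (1 / (real k + 1)))"
    using g0_pos assms by (intro mult_left_mono harm_ln) auto
  have "E p (\<lambda>k. exp (- real k / real N)) \<le> 1 - g0 / (2 * real N) * ln ((real K + 2) / 3)"
    using A B C by linarith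
  also have "\<dots> \<le> exp (- (g0 / (2 * real N) * ln ((real K + 2) / 3)))"
    using exp_ge_add_one_self[of "- (g0 / (2 * real N) * ln ((real K + 2) / 3))"] by simp
  finally show ?thesis unfolding K_def by simp
qed

end

lemma prob_sum_small:
  assumes "finite I" "finite (set_pmf q)" "0 < N"
  shows "E (Pi_pmf I 0 (\<lambda>_. q)) (\<lambda>y. if real (\<Sum>i\<in>I. y i) < real N * A then 1 else 0)
     \<le> exp A * (E q (\<lambda>k. exp (- real k / real N))) ^ card I"
proof -
  let ?P = "Pi_pmf I 0 (\<lambda>_. q)"
  have "E ?P (\<lambda>y. if real (\<Sum>i\<in>I. y i) < real N * A then 1 else 0) \<le> E ?P (\<lambda>y. exp A * (\<Prod>i\<in>I. exp (- real (y i) / real N)))"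
  proof (intro E_mono_fin finite_set_Pi_pmf assms)
    fix y
    have e1: "(\<Prod>i\<in>I. exp (- real (y i) / real N)) = exp (\<Sum>i\<in>I. - real (y i) / real N)"
      using assms by (simp add: exp_sum)
    have e2: "(\<Sum>i\<in>I. - real (y i) / real N) = - (real (\<Sum>i\<in>I. y i) / real N)"
      by (simp add: sum_negf sum_divide_distrib[symmetric])
    have "exp A * (\<Prod>i\<in>I. exp (- real (y i) / real N)) = exp (A - real (\<Sum>i\<in>I. y i) / real N)"
      unfolding e1 e2 by (simp add: mult_exp_exp)
    moreover have "real (\<Sum>i\<in>I. y i) < real N * A \<Longrightarrow> 1 \<le> exp (A - real (\<Sum>i\<in>I. y i) / real N)"
      using assms by (simp add: field_simps)
    ultimately show "(if real (\<Sum>i\<in>I. y i) < real N * A then 1 else 0) \<le> exp A * (\<Prod>i\<in>I. exp (- real (y i) / real N))"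
      by auto
  qed
  also have "\<dots> = exp A * E ?P (\<lambda>y. \<Prod>i\<in>I. exp (- real (y i) / real N))" by simp
  also have "E ?P (\<lambda>y. \<Prod>i\<in>I. exp (- real (y i) / real N)) = (\<Prod>i\<in>I. E q (\<lambda>k. exp (- real k / real N)))"
    using assms by (intro expectation_prod_Pi_pmf) (auto intro: integrable_measure_pmf_finite)
  also have "\<dots> = (E q (\<lambda>k. exp (- real k / real N))) ^ card I" by simp
  finally show ?thesis .
qed

lemma invM_bound:
  assumes "0 < A" "1 \<le> N"
  shows "1 / real (max (2*N) R)^2 \<le> 1 / (real N * A)^2 + (if real R < real N * A then 1 / (4 * (real N)^2) else 0)"
proof (cases "real R < real N * A")
  case True
  have "1 / real (max (2*N) R)^2 \<le> 1 / real (2*N)^2"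
    using assms by (intro divide_left_mono power_mono) auto
  also have "\<dots> = 1 / (4 * (real N)^2)" by (simp add: power2_eq_square)
  finally show ?thesis using True by (simp add: add_increasing)
next
  case False
  have "1 / real (max (2*N) R)^2 \<le> 1 / (real N * A)^2"
    using assms False by (intro divide_left_mono power_mono) (auto intro!: mult_pos_pos)
  thus ?thesis using False by simp
qed


lemma nu1_nonneg: "0 \<le> nu1_fact2 N x"
proof -
  have h: "0 \<le> real k * (real k - 1)" for k by (cases k) auto
  have t: "0 \<le> real k * (real k - 1) * c1 * c2 / c3" if "0 \<le> c1" "0 \<le> c2" "0 \<le> c3" for k and c1 c2 c3 :: real
  proof -
    have "0 \<le> real k * (real k - 1) * c1" using h[of k] that by simp
    hence "0 \<le> real k * (real k - 1) * c1 * c2" using that by simp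
    thus ?thesis using that by simp
  qed
  show ?thesis unfolding nu1_fact2_def by (auto intro!: sum_nonneg t)
qed

lemma choose_ratio:
  assumes "2 \<le> n" "n \<le> S"
  shows "real ((S - 2) choose (n - 2)) / real (S choose n) = real n * (real n - 1) / (real S * (real S - 1))"
proof -
  obtain m where m: "S = Suc (Suc m)" using assms by (metis add_2_eq_Suc le_Suc_ex le_trans)
  obtain j where j: "n = Suc (Suc j)" using assms by (metis add_2_eq_Suc le_Suc_ex)
  have e1: "Suc (Suc j) * (Suc (Suc m) choose Suc (Suc j)) = Suc (Suc m) * (Suc m choose Suc j)"
    by (rule Suc_times_binomial)
  have e2: "Suc j * (Suc m choose Suc j) = Suc m * (m choose j)"
    by (rule Suc_times_binomial)
  have ne: "Suc (Suc j) * Suc j * (Suc (Suc m) choose Suc (Suc j)) = Suc (Suc m) * Suc m * (m choose j)"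
    by (metis e1 e2 mult.assoc mult.commute)
  have "real (Suc (Suc j)) * real (Suc j) * real (Suc (Suc m) choose Suc (Suc j)) = real (Suc (Suc m)) * real (Suc m) * real (m choose j)"
    using arg_cong[OF ne, of real] by (simp only: of_nat_mult)
  hence eq': "real n * (real n - 1) * real (S choose n) = real S * (real S - 1) * real ((S-2) choose (n-2))"
    using m j by simp
  have c: "real (S choose n) \<noteq> 0" using assms by simp
  have d: "real S * (real S - 1) \<noteq> 0" using assms by simp
  show ?thesis using c d eq' by (simp add: frac_eq_eq del: binomial_Suc_Suc)
qed

lemma nu1_at2:
  assumes "x 0 = 2" "2 * N \<le> S_tot N x" "1 \<le> N"
  shows "nu1_fact2 N x = 2 * (real (2*N) * (real (2*N) - 1)) / (real (S_tot N x) * (real (S_tot N x) - 1))"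
proof -
  define S where "S = S_tot N x"
  let ?f = "\<lambda>k. real k * (real k - 1) * real (x 0 choose k) * real ((S - x 0) choose (2*N - k)) / real (S choose (2*N))"
  have "nu1_fact2 N x = (\<Sum>k\<le>2*N. ?f k)" unfolding nu1_fact2_def S_def using assms by simp
  also have "\<dots> = (\<Sum>k\<in>{2}. ?f k)"
  proof (rule sum.mono_neutral_cong_right)
    show "\<forall>i\<in>{..2*N} - {2}. ?f i = 0"
    proof
      fix i assume i: "i \<in> {..2*N} - {2}"
      show "?f i = 0"
      proof (cases "i \<le> 1")
        case True
        hence "real i * (real i - 1) = 0" by (cases i) auto
        thus ?thesis by simp
      next
        case False
        hence "2 < i" using i by auto
        hence "x 0 choose i = 0" using assms by simp
        thus ?thesis by simp
      qed
    qed
  qed (use assms in auto)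
  also have "\<dots> = 2 * (real ((S - 2) choose (2*N - 2)) / real (S choose (2*N)))" using assms by simp
  also have "\<dots> = 2 * (real (2*N) * (real (2*N) - 1) / (real S * (real S - 1)))"
    using assms by (subst choose_ratio) (auto simp: S_def)
  finally show ?thesis unfolding S_def by simp
qed

lemma S_split1:
  assumes "1 \<le> N"
  shows "S_tot N (y(0:=a)) = a + (\<Sum>i\<in>{1..<N}. y i)"
proof -
  have "{..<N} = insert 0 {1..<N}" using assms by auto
  hence "S_tot N (y(0:=a)) = (\<Sum>i\<in>insert 0 {1..<N}. (y(0:=a)) i)" unfolding S_tot_def by simp
  also have "\<dots> = a + (\<Sum>i\<in>{1..<N}. (y(0:=a)) i)" by simp
  also have "(\<Sum>i\<in>{1..<N}. (y(0:=a)) i) = (\<Sum>i\<in>{1..<N}. y i)" by (intro sum.cong) auto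
  finally show ?thesis .
qed

lemma denom_lower:
  assumes "1 \<le> N" "finite (set_pmf q)" "0 < K"
  shows "pmf q 2 * (4 / K^2) * E (Pi_pmf {1..<N} 0 (\<lambda>_. q))
            (\<lambda>y. if 2 * (N - 1) \<le> (\<Sum>i\<in>{1..<N}. y i) \<and> real (2 + (\<Sum>i\<in>{1..<N}. y i)) \<le> K * real N then 1 else 0)
         \<le> E (Pi_pmf {..<N} 0 (\<lambda>_. q)) (nu1_fact2 N)"
proof -
  let ?P = "Pi_pmf {1..<N} 0 (\<lambda>_. q)"
  have finP: "finite (set_pmf ?P)" using assms by (intro finite_set_Pi_pmf) auto
  have "E (Pi_pmf {..<N} 0 (\<lambda>_. q)) (nu1_fact2 N) = E (Pi_pmf (insert 0 {1..<N}) 0 (\<lambda>_. q)) (nu1_fact2 N)"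
  proof -
    have "{..<N} = insert 0 {1..<N}" using assms by auto
    thus ?thesis by simp
  qed
  also have "\<dots> = E q (\<lambda>a. E ?P (\<lambda>y. nu1_fact2 N (y(0:=a))))"
    using assms by (subst E_Pi_insert) auto
  also have "\<dots> \<ge> pmf q 2 * E ?P (\<lambda>y. nu1_fact2 N (y(0:=2)))"
    using assms finP by (intro E_pmf_point E_nonneg_fin nu1_nonneg) auto
  finally have A: "pmf q 2 * E ?P (\<lambda>y. nu1_fact2 N (y(0:=2))) \<le> E (Pi_pmf {..<N} 0 (\<lambda>_. q)) (nu1_fact2 N)" .
  have B: "(4 / K^2) * (if 2 * (N - 1) \<le> (\<Sum>i\<in>{1..<N}. y i) \<and> real (2 + (\<Sum>i\<in>{1..<N}. y i)) \<le> K * real N then 1 else 0)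
      \<le> nu1_fact2 N (y(0:=2))" for y
  proof (cases "2 * (N - 1) \<le> (\<Sum>i\<in>{1..<N}. y i) \<and> real (2 + (\<Sum>i\<in>{1..<N}. y i)) \<le> K * real N")
    case True
    define S where "S = 2 + (\<Sum>i\<in>{1..<N}. y i)"
    have St: "S_tot N (y(0:=2)) = S" unfolding S_def using S_split1[OF assms(1)] by simp
    have S2N: "2 * N \<le> S" using True assms unfolding S_def by auto
    have SK: "real S \<le> K * real N" using True unfolding S_def by simp
    have "nu1_fact2 N (y(0:=2)) = 2 * (real (2*N) * (real (2*N) - 1)) / (real S * (real S - 1))"
      using nu1_at2[of "y(0:=2)" N] St S2N assms by simp
    also have "\<dots> \<ge> 2 * (real (2*N) * real N) / (real S * real S)"
      using S2N assms by (intro frac_le mult_left_mono mult_mono mult_pos_pos) auto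
    also have "2 * (real (2*N) * real N) / (real S * real S) = 4 * (real N)^2 / (real S)^2"
      by (simp add: power2_eq_square)
    also have "4 * (real N)^2 / (real S)^2 \<ge> 4 * (real N)^2 / (K * real N)^2"
      using S2N SK assms by (intro divide_left_mono power_mono mult_pos_pos) auto
    also have "4 * (real N)^2 / (K * real N)^2 = 4 / K^2"
      using assms by (simp add: power_mult_distrib)
    finally have fin: "4 / K^2 \<le> nu1_fact2 N (y(0:=2))" .
    have cond: "(if 2 * (N - 1) \<le> (\<Sum>i\<in>{1..<N}. y i) \<and> real (2 + (\<Sum>i\<in>{1..<N}. y i)) \<le> K * real N then 1 else 0) = (1::real)"
      using True by simp
    show ?thesis unfolding cond using fin by linarith
  next
    case False
    show ?thesis using nu1_nonneg[of N "y(0:=2)"] by (simp only: if_not_P[OF False] mult_zero_right)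
  qed
  have "(4 / K^2) * E ?P (\<lambda>y. if 2 * (N - 1) \<le> (\<Sum>i\<in>{1..<N}. y i) \<and> real (2 + (\<Sum>i\<in>{1..<N}. y i)) \<le> K * real N then 1 else 0)
     \<le> E ?P (\<lambda>y. nu1_fact2 N (y(0:=2)))"
    using finP B by (subst integral_mult_right_zero[symmetric]) (intro E_mono_fin)
  hence "pmf q 2 * ((4 / K^2) * E ?P (\<lambda>y. if 2 * (N - 1) \<le> (\<Sum>i\<in>{1..<N}. y i) \<and> real (2 + (\<Sum>i\<in>{1..<N}. y i)) \<le> K * real N then 1 else 0))
     \<le> pmf q 2 * E ?P (\<lambda>y. nu1_fact2 N (y(0:=2)))"
    by (intro mult_left_mono) auto
  with A show ?thesis by (simp add: mult.assoc)
qed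


definition MZ :: "nat pmf \<Rightarrow> (nat \<Rightarrow> real) \<Rightarrow> nat set \<Rightarrow> nat \<Rightarrow> real" where
  "MZ q D I m = E (Pi_pmf I 0 (\<lambda>_. q)) (\<lambda>y. (\<Sum>i\<in>I. D (y i))^m)"

definition Dm :: "nat pmf \<Rightarrow> (nat \<Rightarrow> real) \<Rightarrow> nat \<Rightarrow> real" where
  "Dm q D m = E q (\<lambda>a. D a ^ m)"

lemma E_sum_fin:
  assumes "finite (set_pmf M)"
  shows "E M (\<lambda>y. \<Sum>k\<in>A. f k y) = (\<Sum>k\<in>A. E M (f k))"
  using assms by (intro Bochner_Integration.integral_sum integrable_measure_pmf_finite)

lemma mom_insert:
  assumes "finite I" "j \<notin> I" "finite (set_pmf q)"
  shows "MZ q D (insert j I) m = (\<Sum>k\<le>m. real (m choose k) * Dm q D k * MZ q D I (m-k))"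
proof -
  let ?P = "Pi_pmf I 0 (\<lambda>_. q)"
  have finP: "finite (set_pmf ?P)" using assms by (intro finite_set_Pi_pmf) auto
  have sumeq: "(\<Sum>i\<in>insert j I. D ((y(j:=a)) i)) = D a + (\<Sum>i\<in>I. D (y i))" for y a
  proof -
    have "(\<Sum>i\<in>insert j I. D ((y(j:=a)) i)) = D a + (\<Sum>i\<in>I. D ((y(j:=a)) i))" using assms by simp
    also have "(\<Sum>i\<in>I. D ((y(j:=a)) i)) = (\<Sum>i\<in>I. D (y i))" using assms by (intro sum.cong) auto
    finally show ?thesis .
  qed
  have "MZ q D (insert j I) m = E q (\<lambda>a. E ?P (\<lambda>y. (\<Sum>i\<in>insert j I. D ((y(j:=a)) i))^m))"
    unfolding MZ_def using assms by (subst E_Pi_insert) auto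
  also have "\<dots> = E q (\<lambda>a. E ?P (\<lambda>y. \<Sum>k\<le>m. real (m choose k) * D a ^ k * (\<Sum>i\<in>I. D (y i)) ^ (m-k)))"
    unfolding sumeq binomial_ring by simp
  also have "\<dots> = E q (\<lambda>a. \<Sum>k\<le>m. real (m choose k) * D a ^ k * MZ q D I (m-k))"
    unfolding MZ_def using finP by (simp add: E_sum_fin)
  also have "\<dots> = (\<Sum>k\<le>m. real (m choose k) * Dm q D k * MZ q D I (m-k))"
    unfolding Dm_def using assms by (simp add: E_sum_fin)
  finally show ?thesis .
qed

lemma mom_empty: "MZ q D {} m = (if m = 0 then 1 else 0)"
  unfolding MZ_def by simp

lemma sum4: "(\<Sum>k\<le>(4::nat). f k) = f 0 + f 1 + f 2 + f 3 + (f 4 :: real)"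
  by (simp add: numeral_eq_Suc atMost_Suc add_ac)
lemma sum2: "(\<Sum>k\<le>(2::nat). f k) = f 0 + f 1 + (f 2 :: real)"
  by (simp add: numeral_eq_Suc atMost_Suc add_ac)
lemma sum1: "(\<Sum>k\<le>(1::nat). f k) = f 0 + (f 1 :: real)"
  by (simp add: atMost_Suc add_ac)

lemma moments:
  assumes "finite I" "finite (set_pmf q)" "Dm q D 1 = 0"
  shows "MZ q D I 0 = 1" "MZ q D I 1 = 0" "MZ q D I 2 = real (card I) * Dm q D 2"
    "MZ q D I 4 = real (card I) * Dm q D 4 + 3 * real (card I) * (real (card I) - 1) * (Dm q D 2)^2"
proof -
  have D0: "Dm q D 0 = 1" unfolding Dm_def by simp
  have M0: "MZ q D J 0 = 1" for J unfolding MZ_def by simp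
  show "MZ q D I 0 = 1" by (rule M0)
  have M1: "MZ q D I 1 = 0" using assms(1)
  proof (induction rule: finite_induct)
    case empty thus ?case by (simp add: mom_empty)
  next
    case (insert j I)
    have "MZ q D (insert j I) 1 = (\<Sum>k\<le>1. real (1 choose k) * Dm q D k * MZ q D I (1-k))"
      using insert assms by (intro mom_insert) auto
    also have "\<dots> = 0" unfolding sum1 using insert assms by (simp add: D0 M0)
    finally show ?case .
  qed
  show "MZ q D I 1 = 0" by (rule M1)
  have M12: "MZ q D I 1 = 0 \<and> MZ q D I 2 = real (card I) * Dm q D 2" using assms(1)
  proof (induction rule: finite_induct)
    case empty thus ?case by (simp add: mom_empty)
  next
    case (insert j I)
    have "MZ q D (insert j I) 1 = (\<Sum>k\<le>1. real (1 choose k) * Dm q D k * MZ q D I (1-k))"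
      using insert assms by (intro mom_insert) auto
    also have "\<dots> = 0" unfolding sum1 using insert assms by (simp add: D0 M0)
    finally have A: "MZ q D (insert j I) 1 = 0" .
    have "MZ q D (insert j I) 2 = (\<Sum>k\<le>2. real (2 choose k) * Dm q D k * MZ q D I (2-k))"
      using insert assms by (intro mom_insert) auto
    also have "\<dots> = MZ q D I 2 + 2 * Dm q D 1 * MZ q D I 1 + Dm q D 2"
      unfolding sum2 by (simp add: D0 M0)
    also have "\<dots> = real (card (insert j I)) * Dm q D 2" using insert assms by (simp add: algebra_simps)
    finally show ?case using A by simp
  qed
  show "MZ q D I 2 = real (card I) * Dm q D 2" using M12 by simp
  have M4: "MZ q D I 1 = 0 \<and> MZ q D I 2 = real (card I) * Dm q D 2 \<and>
     MZ q D I 4 = real (card I) * Dm q D 4 + 3 * real (card I) * (real (card I) - 1) * (Dm q D 2)^2" using assms(1)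
  proof (induction rule: finite_induct)
    case empty thus ?case by (simp add: mom_empty)
  next
    case (insert j I)
    have "MZ q D (insert j I) 1 = (\<Sum>k\<le>1. real (1 choose k) * Dm q D k * MZ q D I (1-k))"
      using insert assms by (intro mom_insert) auto
    also have "\<dots> = 0" unfolding sum1 using insert assms by (simp add: D0 M0)
    finally have A: "MZ q D (insert j I) 1 = 0" .
    have "MZ q D (insert j I) 2 = (\<Sum>k\<le>2. real (2 choose k) * Dm q D k * MZ q D I (2-k))"
      using insert assms by (intro mom_insert) auto
    also have "\<dots> = MZ q D I 2 + 2 * Dm q D 1 * MZ q D I 1 + Dm q D 2"
      unfolding sum2 by (simp add: D0 M0)
    also have "\<dots> = real (card (insert j I)) * Dm q D 2" using insert assms by (simp add: algebra_simps)
    finally have B: "MZ q D (insert j I) 2 = real (card (insert j I)) * Dm q D 2" .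
    have "MZ q D (insert j I) 4 = (\<Sum>k\<le>4. real (4 choose k) * Dm q D k * MZ q D I (4-k))"
      using insert assms by (intro mom_insert) auto
    also have "\<dots> = MZ q D I 4 + 4 * Dm q D 1 * MZ q D I 3 + 6 * Dm q D 2 * MZ q D I 2
        + 4 * Dm q D 3 * MZ q D I 1 + Dm q D 4"
      unfolding sum4 by (simp add: D0 M0 numeral_eq_Suc)
    also have "\<dots> = real (card (insert j I)) * Dm q D 4 + 3 * real (card (insert j I)) * (real (card (insert j I)) - 1) * (Dm q D 2)^2"
      using insert assms by (simp add: algebra_simps power2_eq_square)
    finally show ?case using A B by simp
  qed
  show "MZ q D I 4 = real (card I) * Dm q D 4 + 3 * real (card I) * (real (card I) - 1) * (Dm q D 2)^2"
    using M4 by simp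
qed


lemma E_as_sum:
  assumes "finite (set_pmf M)"
  shows "E M f = (\<Sum>x\<in>set_pmf M. pmf M x * f x)"
  using assms by (subst integral_measure_pmf[of "set_pmf M"]) auto

lemma E_CS:
  assumes "finite (set_pmf M)"
  shows "(E M (\<lambda>x. U x * V x))^2 \<le> E M (\<lambda>x. (U x)^2) * E M (\<lambda>x. (V x)^2)"
proof -
  let ?s = "\<lambda>x. sqrt (pmf M x)"
  have "E M (\<lambda>x. U x * V x) = (\<Sum>x\<in>set_pmf M. (?s x * U x) * (?s x * V x))"
    using assms by (simp add: E_as_sum algebra_simps real_sqrt_mult[symmetric])
  moreover have "E M (\<lambda>x. (U x)^2) = (\<Sum>x\<in>set_pmf M. (?s x * U x)^2)"
    using assms by (simp add: E_as_sum power_mult_distrib)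
  moreover have "E M (\<lambda>x. (V x)^2) = (\<Sum>x\<in>set_pmf M. (?s x * V x)^2)"
    using assms by (simp add: E_as_sum power_mult_distrib)
  ultimately show ?thesis by (simp add: Cauchy_Schwarz_ineq_sum)
qed

lemma l1: "sqrt \<bar>z\<bar> * (\<bar>z\<bar> * sqrt \<bar>z\<bar>) = (z::real)^2"
proof -
  have "sqrt \<bar>z\<bar> * (\<bar>z\<bar> * sqrt \<bar>z\<bar>) = \<bar>z\<bar> * (sqrt \<bar>z\<bar> * sqrt \<bar>z\<bar>)" by (simp only: ac_simps)
  also have "sqrt \<bar>z\<bar> * sqrt \<bar>z\<bar> = \<bar>z\<bar>" by simp
  also have "\<bar>z\<bar> * \<bar>z\<bar> = z^2" by (simp add: power2_eq_square)
  finally show ?thesis .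
qed

lemma l2: "(\<bar>z\<bar> * sqrt \<bar>z\<bar>)^2 = \<bar>z::real\<bar>^3"
proof -
  have "(\<bar>z\<bar> * sqrt \<bar>z\<bar>)^2 = \<bar>z\<bar>^2 * (sqrt \<bar>z\<bar>)^2" by (simp only: power_mult_distrib)
  also have "(sqrt \<bar>z\<bar>)^2 = \<bar>z\<bar>" by simp
  also have "\<bar>z\<bar>^2 * \<bar>z\<bar> = \<bar>z\<bar>^3" by (simp add: power2_eq_square power3_eq_cube)
  finally show ?thesis .
qed

lemma l3: "\<bar>z::real\<bar>^3 = \<bar>z\<bar> * z^2"
  by (simp add: power2_eq_square power3_eq_cube abs_mult_self_eq)

lemma l4: "((z::real)^2)^2 = z^4" by simp

lemma E_holder3:
  assumes "finite (set_pmf M)"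
  shows "(E M (\<lambda>x. (Z x)^2))^3 \<le> (E M (\<lambda>x. \<bar>Z x\<bar>))^2 * E M (\<lambda>x. (Z x)^4)"
proof -
  let ?a = "E M (\<lambda>x. \<bar>Z x\<bar>)" and ?b = "E M (\<lambda>x. (Z x)^2)" and ?c = "E M (\<lambda>x. \<bar>Z x\<bar>^3)" and ?d = "E M (\<lambda>x. (Z x)^4)"
  have 1: "?b^2 \<le> ?a * ?c"
  proof -
    have "?b = E M (\<lambda>x. sqrt \<bar>Z x\<bar> * (\<bar>Z x\<bar> * sqrt \<bar>Z x\<bar>))"
      by (simp only: l1)
    hence "?b^2 \<le> E M (\<lambda>x. (sqrt \<bar>Z x\<bar>)^2) * E M (\<lambda>x. (\<bar>Z x\<bar> * sqrt \<bar>Z x\<bar>)^2)"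
      using E_CS[OF assms, of "\<lambda>x. sqrt \<bar>Z x\<bar>" "\<lambda>x. \<bar>Z x\<bar> * sqrt \<bar>Z x\<bar>"] by (simp only:)
    also have "E M (\<lambda>x. (sqrt \<bar>Z x\<bar>)^2) = ?a" by simp
    also have "E M (\<lambda>x. (\<bar>Z x\<bar> * sqrt \<bar>Z x\<bar>)^2) = ?c"
      by (simp only: l2)
    finally show ?thesis .
  qed
  have 2: "?c^2 \<le> ?b * ?d"
  proof -
    have "?c = E M (\<lambda>x. \<bar>Z x\<bar> * (Z x)^2)"
      by (simp only: l3)
    hence "?c^2 \<le> E M (\<lambda>x. \<bar>Z x\<bar>^2) * E M (\<lambda>x. ((Z x)^2)^2)"
      using E_CS[OF assms, of "\<lambda>x. \<bar>Z x\<bar>" "\<lambda>x. (Z x)^2"] by simp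
    thus ?thesis by (simp only: power2_abs l4)
  qed
  have a0: "0 \<le> ?a" and b0: "0 \<le> ?b" and c0: "0 \<le> ?c" and d0: "0 \<le> ?d"
    by (auto intro!: E_nonneg_fin)
  show ?thesis
  proof (cases "?b = 0")
    case True thus ?thesis using a0 d0 by simp
  next
    case False
    have bp: "?b > 0" using b0 False by (simp add: order_le_less)
    have "(?b^2)^2 \<le> (?a * ?c)^2" using 1 b0 by (intro power_mono) auto
    also have "\<dots> = ?a^2 * ?c^2" by (simp add: power_mult_distrib)
    also have "\<dots> \<le> ?a^2 * (?b * ?d)" using 2 by (intro mult_left_mono) auto
    finally have "?b * ?b^3 \<le> ?b * (?a^2 * ?d)" by (simp add: algebra_simps power2_eq_square power3_eq_cube power4_eq_xxxx)
    thus ?thesis using bp by simp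
  qed
qed

lemma E_PZ:
  assumes "finite (set_pmf M)" "E M Z = 0" "0 \<le> t" "t \<le> E M (\<lambda>x. \<bar>Z x\<bar>) / 2"
  shows "(E M (\<lambda>x. \<bar>Z x\<bar>) / 2 - t)^2 \<le> E M (\<lambda>x. (Z x)^2) * E M (\<lambda>x. if t \<le> Z x then 1 else 0)"
proof -
  have int: "integrable M f" for f :: "_ \<Rightarrow> real" using assms(1) by (rule integrable_measure_pmf_finite)
  have "E M (\<lambda>x. \<bar>Z x\<bar>) = E M (\<lambda>x. 2 * max (Z x) 0 - Z x)"
    by (intro Bochner_Integration.integral_cong) auto
  also have "\<dots> = 2 * E M (\<lambda>x. max (Z x) 0)"
    using assms by (simp add: int)
  finally have pos: "E M (\<lambda>x. \<bar>Z x\<bar>) / 2 = E M (\<lambda>x. max (Z x) 0)" by simp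
  have "E M (\<lambda>x. max (Z x) 0) \<le> E M (\<lambda>x. t + Z x * (if t \<le> Z x then 1 else 0))"
    using assms by (intro E_mono_fin) auto
  also have "\<dots> = t + E M (\<lambda>x. Z x * (if t \<le> Z x then 1 else 0))" by (simp add: int)
  finally have A: "E M (\<lambda>x. \<bar>Z x\<bar>) / 2 - t \<le> E M (\<lambda>x. Z x * (if t \<le> Z x then 1 else 0))"
    using pos by simp
  have "(E M (\<lambda>x. \<bar>Z x\<bar>) / 2 - t)^2 \<le> (E M (\<lambda>x. Z x * (if t \<le> Z x then 1 else 0)))^2"
    using A assms by (intro power_mono) auto
  also have "\<dots> \<le> E M (\<lambda>x. (Z x)^2) * E M (\<lambda>x. (if t \<le> Z x then 1 else 0)^2)"
    by (rule E_CS[OF assms(1)])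
  also have "E M (\<lambda>x. (if t \<le> Z x then 1 else 0::real)^2) = E M (\<lambda>x. if t \<le> Z x then 1 else 0)"
    by (intro Bochner_Integration.integral_cong) auto
  finally show ?thesis .
qed


lemma AC_generic:
  fixes D :: "nat \<Rightarrow> real" and I :: "nat set"
  assumes fq: "finite (set_pmf q)" and fI: "finite I" and n: "card I = n"
    and D1: "Dm q D 1 = 0" and s2: "0 < Dm q D 2" and t: "0 \<le> t"
    and tb: "16 * t^2 * (real n * Dm q D 4 + 3 * (real n)^2 * (Dm q D 2)^2) \<le> (real n * Dm q D 2)^3"
    and npos: "1 \<le> n"
  shows "(real n * Dm q D 2)^2 \<le> 16 * (real n * Dm q D 4 + 3 * (real n)^2 * (Dm q D 2)^2) *
           E (Pi_pmf I 0 (\<lambda>_. q)) (\<lambda>y. if t \<le> (\<Sum>i\<in>I. D (y i)) then 1 else 0)"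
proof -
  let ?M = "Pi_pmf I 0 (\<lambda>_. q)"
  let ?Z = "\<lambda>y. \<Sum>i\<in>I. D (y i)"
  have fM: "finite (set_pmf ?M)" using fq fI by (intro finite_set_Pi_pmf) auto
  note mom = moments[OF fI fq D1]
  define V2 where "V2 = real n * Dm q D 2"
  define V4 where "V4 = real n * Dm q D 4 + 3 * (real n)^2 * (Dm q D 2)^2"
  define A where "A = E ?M (\<lambda>y. \<bar>?Z y\<bar>)"
  define P where "P = E ?M (\<lambda>y. if t \<le> ?Z y then 1 else 0)"
  have EZ: "E ?M ?Z = 0" using mom(2) unfolding MZ_def by simp
  have EZ2: "E ?M (\<lambda>y. (?Z y)^2) = V2" using mom(3) n unfolding MZ_def V2_def by simp
  have d4: "0 \<le> Dm q D 4" unfolding Dm_def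
  proof (intro E_nonneg_fin)
    fix x show "0 \<le> D x ^ 4" by (simp add: zero_le_even_power)
  qed
  have EZ4: "E ?M (\<lambda>y. (?Z y)^4) \<le> V4"
  proof -
    have "E ?M (\<lambda>y. (?Z y)^4) = real n * Dm q D 4 + 3 * real n * (real n - 1) * (Dm q D 2)^2"
      using mom(4) n unfolding MZ_def by simp
    also have "\<dots> \<le> V4" unfolding V4_def
    proof -
      have "3 * real n * (real n - 1) * (Dm q D 2)^2 \<le> 3 * real n * real n * (Dm q D 2)^2"
        by (intro mult_right_mono mult_left_mono) auto
      thus "real n * Dm q D 4 + 3 * real n * (real n - 1) * (Dm q D 2)^2 \<le> real n * Dm q D 4 + 3 * (real n)^2 * (Dm q D 2)^2"
        by (simp add: power2_eq_square)
    qed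
    finally show ?thesis .
  qed
  have V2pos: "0 < V2" unfolding V2_def using s2 npos by auto
  have A0: "0 \<le> A" unfolding A_def by (intro E_nonneg_fin) auto
  have hol: "V2^3 \<le> A^2 * V4"
  proof -
    have "V2^3 \<le> A^2 * E ?M (\<lambda>y. (?Z y)^4)" using E_holder3[OF fM, of ?Z] EZ2 unfolding A_def by simp
    also have "\<dots> \<le> A^2 * V4" using EZ4 by (intro mult_left_mono) auto
    finally show ?thesis .
  qed
  have V4pos: "0 < V4"
  proof -
    have "0 < 3 * (real n)^2 * (Dm q D 2)^2" using s2 npos by simp
    moreover have "0 \<le> real n * Dm q D 4" using d4 by simp
    ultimately show ?thesis unfolding V4_def by linarith
  qed
  have "16 * t^2 * V4 \<le> A^2 * V4" using tb hol unfolding V2_def V4_def by linarith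
  hence "(4 * t)^2 \<le> A^2" using V4pos by (simp add: power_mult_distrib)
  hence tA: "4 * t \<le> A" by (rule power2_le_imp_le[OF _ A0])
  have pz: "(A / 2 - t)^2 \<le> V2 * P"
    using E_PZ[OF fM EZ t] tA A0 EZ2 unfolding A_def P_def by simp
  have "(A/4)^2 \<le> (A / 2 - t)^2" using tA A0 t by (intro power_mono) auto
  hence A2: "A^2 \<le> 16 * (V2 * P)" using pz by (simp add: power_divide)
  have "A^2 * V4 \<le> 16 * (V2 * P) * V4" using A2 V4pos by (intro mult_right_mono) auto
  with hol have h3: "V2^3 \<le> 16 * (V2 * P) * V4" by linarith
  have e1: "V2^3 = V2 * V2^2" by (simp add: power3_eq_cube power2_eq_square)
  have e2: "16 * (V2 * P) * V4 = V2 * (16 * V4 * P)" by (simp only: ac_simps)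
  have "V2 * V2^2 \<le> V2 * (16 * V4 * P)" using h3 unfolding e1 e2 .
  hence "V2^2 \<le> 16 * V4 * P" using V2pos by (rule mult_left_le_imp_le)
  thus ?thesis unfolding V2_def V4_def P_def by simp
qed


definition Yt :: "real \<Rightarrow> nat \<Rightarrow> real" where "Yt L k = min (real k) L"

lemma mono_frac:
  fixes s0 x C :: real
  assumes "0 < s0" "s0 \<le> x" "0 \<le> C"
  shows "s0^2 / (C + 3 * s0^2) \<le> x^2 / (C + 3 * x^2)"
proof -
  have "s0^2 \<le> x^2" using assms by (intro power_mono) auto
  hence "s0^2 * C \<le> x^2 * C" using assms by (intro mult_right_mono) auto
  hence "s0^2 * (C + 3 * x^2) \<le> x^2 * (C + 3 * s0^2)" by (simp add: algebra_simps)
  moreover have "0 < C + 3 * s0^2" "0 < C + 3 * x^2" using assms by (auto intro: add_nonneg_pos)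
  ultimately show ?thesis by (simp add: divide_simps)
qed

lemma AC_cls:
  assumes fq: "finite (set_pmf p)" and N: "2 \<le> N" and mean: "2 < E p real"
    and s0: "0 < s0" and C4: "0 \<le> C4"
    and sig: "s0 \<le> Dm p (\<lambda>k. Yt L k - E p (Yt L)) 2"
    and m4: "Dm p (\<lambda>k. Yt L k - E p (Yt L)) 4 \<le> C4 * real (N - 1)"
    and tb: "16 * (real (N - 1) * (E p real - E p (Yt L)))^2 * (C4 + 3 * (Dm p (\<lambda>k. Yt L k - E p (Yt L)) 2)^2)
               \<le> real (N - 1) * (Dm p (\<lambda>k. Yt L k - E p (Yt L)) 2)^3"
  shows "s0^2 / (16 * (C4 + 3 * s0^2)) \<le> E (Pi_pmf {1..<N} 0 (\<lambda>_. p)) (\<lambda>y. if 2 * (N - 1) \<le> (\<Sum>i\<in>{1..<N}. y i) then 1 else 0)"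
proof -
  define n where "n = N - 1"
  define \<nu> where "\<nu> = E p (Yt L)"
  define \<mu> where "\<mu> = E p real"
  define D where "D = (\<lambda>k. Yt L k - \<nu>)"
  define \<sigma> where "\<sigma> = Dm p D 2"
  define m where "m = Dm p D 4"
  define t where "t = real n * (\<mu> - \<nu>)"
  define I where "I = {1..<N}"
  let ?M = "Pi_pmf I 0 (\<lambda>_. p)"
  have fM: "finite (set_pmf ?M)" using fq by (intro finite_set_Pi_pmf) (auto simp: I_def)
  have int: "integrable p f" for f :: "nat \<Rightarrow> real" using fq by (rule integrable_measure_pmf_finite)
  have cI: "card I = n" unfolding I_def n_def by simp
  have n1: "1 \<le> n" using N unfolding n_def by simp
  have D1: "Dm p D 1 = 0" unfolding Dm_def D_def \<nu>_def by (simp add: int prob_space.prob_space measure_pmf.prob_space_axioms)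
  have \<nu>\<mu>: "\<nu> \<le> \<mu>" unfolding \<nu>_def \<mu>_def using fq by (intro E_mono_fin) (auto simp: Yt_def)
  have t0: "0 \<le> t" unfolding t_def using \<nu>\<mu> by simp
  have sp: "0 < \<sigma>" using sig s0 unfolding \<sigma>_def D_def \<nu>_def by linarith
  have tb': "16 * t^2 * (real n * m + 3 * (real n)^2 * \<sigma>^2) \<le> (real n * \<sigma>)^3"
  proof -
    have "real n * m + 3 * (real n)^2 * \<sigma>^2 \<le> real n * (C4 * real n) + 3 * (real n)^2 * \<sigma>^2"
      using m4 n1 unfolding m_def D_def \<nu>_def n_def by (intro add_right_mono mult_left_mono) auto
    also have "\<dots> = (real n)^2 * (C4 + 3 * \<sigma>^2)" by (simp add: power2_eq_square algebra_simps)
    finally have "16 * t^2 * (real n * m + 3 * (real n)^2 * \<sigma>^2) \<le> 16 * t^2 * ((real n)^2 * (C4 + 3 * \<sigma>^2))"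
      by (intro mult_left_mono) auto
    also have "\<dots> = (real n)^2 * (16 * t^2 * (C4 + 3 * \<sigma>^2))" by (simp add: algebra_simps)
    also have "\<dots> \<le> (real n)^2 * (real n * \<sigma>^3)"
      using tb unfolding t_def \<sigma>_def D_def \<nu>_def \<mu>_def n_def by (intro mult_left_mono) auto
    also have "\<dots> = (real n * \<sigma>)^3" by (simp add: power2_eq_square power3_eq_cube)
    finally show ?thesis .
  qed
  have AC: "(real n * \<sigma>)^2 \<le> 16 * (real n * m + 3 * (real n)^2 * \<sigma>^2) *
           E ?M (\<lambda>y. if t \<le> (\<Sum>i\<in>I. D (y i)) then 1 else 0)"
    unfolding \<sigma>_def m_def using AC_generic[OF fq _ cI D1 _ t0 _ n1] sp tb' unfolding \<sigma>_def m_def I_def by simp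
  define P where "P = E ?M (\<lambda>y. if 2 * (N - 1) \<le> (\<Sum>i\<in>I. y i) then 1 else 0)"
  have PP: "E ?M (\<lambda>y. if t \<le> (\<Sum>i\<in>I. D (y i)) then 1 else 0) \<le> P"
    unfolding P_def
  proof (intro E_mono_fin fM)
    fix y :: "nat \<Rightarrow> nat"
    show "(if t \<le> (\<Sum>i\<in>I. D (y i)) then 1 else 0) \<le> (if 2 * (N - 1) \<le> (\<Sum>i\<in>I. y i) then 1 else (0::real))"
    proof (cases "t \<le> (\<Sum>i\<in>I. D (y i))")
      case True
      have "(\<Sum>i\<in>I. D (y i)) = (\<Sum>i\<in>I. Yt L (y i)) - real n * \<nu>"
        unfolding D_def using cI by (simp add: sum_subtractf)
      hence "real n * \<mu> \<le> (\<Sum>i\<in>I. Yt L (y i))" using True unfolding t_def by (simp add: algebra_simps)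
      moreover have "(\<Sum>i\<in>I. Yt L (y i)) \<le> real (\<Sum>i\<in>I. y i)"
        by (simp add: Yt_def sum_mono)
      moreover have "real (2 * (N - 1)) \<le> real n * \<mu>"
      proof -
        have "real n * 2 \<le> real n * \<mu>" using mean unfolding \<mu>_def by (intro mult_left_mono) auto
        thus ?thesis unfolding n_def by simp
      qed
      ultimately have "real (2 * (N - 1)) \<le> real (\<Sum>i\<in>I. y i)" by linarith
      hence "2 * (N - 1) \<le> (\<Sum>i\<in>I. y i)" by linarith
      thus ?thesis by simp
    qed (simp)
  qed
  have "(real n)^2 * \<sigma>^2 \<le> 16 * ((real n)^2 * (C4 + 3 * \<sigma>^2)) * P"
  proof -
    have "(real n)^2 * \<sigma>^2 = (real n * \<sigma>)^2" by (simp add: power_mult_distrib)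
    also have "\<dots> \<le> 16 * (real n * m + 3 * (real n)^2 * \<sigma>^2) * E ?M (\<lambda>y. if t \<le> (\<Sum>i\<in>I. D (y i)) then 1 else 0)"
      by (rule AC)
    also have "\<dots> \<le> 16 * ((real n)^2 * (C4 + 3 * \<sigma>^2)) * P"
    proof (rule mult_mono[OF _ PP])
      have "real n * m \<le> real n * (C4 * real n)"
        using m4 n1 unfolding m_def D_def \<nu>_def n_def by (intro mult_left_mono) auto
      thus "16 * (real n * m + 3 * (real n)^2 * \<sigma>^2) \<le> 16 * ((real n)^2 * (C4 + 3 * \<sigma>^2))"
        by (simp add: power2_eq_square algebra_simps)
      show "0 \<le> 16 * ((real n)^2 * (C4 + 3 * \<sigma>^2))" using C4 by simp
      show "0 \<le> E ?M (\<lambda>y. if t \<le> (\<Sum>i\<in>I. D (y i)) then 1 else 0::real)" by (intro E_nonneg_fin) auto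
    qed
    finally show ?thesis .
  qed
  hence "(real n)^2 * \<sigma>^2 \<le> (real n)^2 * (16 * (C4 + 3 * \<sigma>^2) * P)" by (simp add: algebra_simps)
  hence "\<sigma>^2 \<le> 16 * (C4 + 3 * \<sigma>^2) * P" using n1 by simp
  hence X: "\<sigma>^2 / (C4 + 3 * \<sigma>^2) / 16 \<le> P"
    using sp C4 by (simp add: divide_le_eq mult.commute add_nonneg_pos)
  moreover have "s0^2 / (C4 + 3 * s0^2) \<le> \<sigma>^2 / (C4 + 3 * \<sigma>^2)"
    using s0 sig C4 unfolding \<sigma>_def D_def \<nu>_def by (intro mono_frac) auto
  ultimately have "s0^2 / (C4 + 3 * s0^2) / 16 \<le> P"
    by (meson divide_right_mono order.trans zero_le_numeral)
  hence "s0^2 / (16 * (C4 + 3 * s0^2)) \<le> P" by (simp add: divide_divide_eq_left mult.commute)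
  thus ?thesis unfolding P_def I_def .
qed


lemma Yt_nonneg: "0 \<le> L \<Longrightarrow> 0 \<le> Yt L k" unfolding Yt_def by auto
lemma Yt_le: "Yt L k \<le> real k" unfolding Yt_def by auto

context cls begin

lemma int: "integrable p (h :: nat \<Rightarrow> real)" using fin by (rule integrable_measure_pmf_finite)

lemma mu_bound:
  assumes "1 < a"
  shows "E p real \<le> 2 + B * a * Zs a"
proof -
  have "E p real = E p (\<lambda>k. real k powr 1)"
    by (intro Bochner_Integration.integral_cong) auto
  also have "\<dots> \<le> 2 + B * a * Zs (a + 1 - 1)" using assms by (intro moment) auto
  finally show ?thesis by simp
qed

lemma mu_nonneg: "0 \<le> E p real" by (intro E_nonneg_fin) auto

lemma nu_le_mu: "E p (Yt L) \<le> E p real"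
  using fin by (intro E_mono_fin) (auto simp: Yt_le)

lemma nu_nonneg: "0 \<le> L \<Longrightarrow> 0 \<le> E p (Yt L)"
  by (intro E_nonneg_fin Yt_nonneg)

lemma sig_eq: "Dm p (\<lambda>k. Yt L k - E p (Yt L)) 2 = E p (\<lambda>k. (Yt L k)^2) - (E p (Yt L))^2"
proof -
  define \<nu> where "\<nu> = E p (Yt L)"
  have "Dm p (\<lambda>k. Yt L k - \<nu>) 2 = E p (\<lambda>k. (Yt L k)^2 - 2 * \<nu> * Yt L k + \<nu>^2)"
    unfolding Dm_def by (intro Bochner_Integration.integral_cong) (auto simp: power2_eq_square algebra_simps)
  also have "\<dots> = E p (\<lambda>k. (Yt L k)^2) - 2 * \<nu> * \<nu> + \<nu>^2"
    by (simp add: int \<nu>_def prob_space.prob_space measure_pmf.prob_space_axioms)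
  finally show ?thesis unfolding \<nu>_def by (simp add: power2_eq_square)
qed

lemma m4_le:
  assumes "0 \<le> L"
  shows "Dm p (\<lambda>k. Yt L k - E p (Yt L)) 4 \<le> E p (\<lambda>k. (Yt L k)^4) + (E p real)^4"
proof -
  define \<nu> where "\<nu> = E p (Yt L)"
  have nu0: "0 \<le> \<nu>" unfolding \<nu>_def using nu_nonneg[OF assms] .
  have pt: "(Yt L k - \<nu>)^4 \<le> (Yt L k)^4 + \<nu>^4" for k
  proof -
    have y0: "0 \<le> Yt L k" using Yt_nonneg[OF assms] .
    have "\<bar>Yt L k - \<nu>\<bar> \<le> max (Yt L k) \<nu>" using y0 nu0 by auto
    hence "\<bar>Yt L k - \<nu>\<bar>^4 \<le> (max (Yt L k) \<nu>)^4" by (intro power_mono) auto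
    also have "\<dots> \<le> (Yt L k)^4 + \<nu>^4" using y0 nu0 by (cases "Yt L k \<le> \<nu>") (auto simp: max_def)
    finally show ?thesis by (simp add: power_even_abs_numeral)
  qed
  have "Dm p (\<lambda>k. Yt L k - \<nu>) 4 \<le> E p (\<lambda>k. (Yt L k)^4 + \<nu>^4)"
    unfolding Dm_def using fin pt by (intro E_mono_fin) auto
  also have "\<dots> = E p (\<lambda>k. (Yt L k)^4) + \<nu>^4"
    by (simp add: int prob_space.prob_space measure_pmf.prob_space_axioms)
  also have "\<nu>^4 \<le> (E p real)^4" unfolding \<nu>_def using nu0 nu_le_mu by (intro power_mono) (auto simp: \<nu>_def)
  finally show ?thesis unfolding \<nu>_def by simp
qed

lemma mu_nu_eq: "E p real - E p (Yt L) = E p (\<lambda>k. real k - Yt L k)"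
  by (simp add: int)

lemma sig_lower:
  assumes "3 \<le> z" "3 \<le> L"
  shows "min (g0 * (2 powr (-a) - 3 powr (-a))) (g0 * (3 powr (-a) - 4 powr (-a))) / 2 \<le> Dm p (\<lambda>k. Yt L k - E p (Yt L)) 2"
proof -
  define \<nu> where "\<nu> = E p (Yt L)"
  define p2 where "p2 = g0 * (2 powr (-a) - 3 powr (-a))"
  define p3 where "p3 = g0 * (3 powr (-a) - 4 powr (-a))"
  have P2: "p2 \<le> pmf p 2" unfolding p2_def using lower[of 2] assms by simp
  have P3: "p3 \<le> pmf p 3" unfolding p3_def using lower[of 3] assms by simp
  have p2p: "0 < p2" unfolding p2_def using g0_pos a_pos by (intro mult_pos_pos) (auto intro!: powr_less_mono2_neg)
  have p3p: "0 < p3" unfolding p3_def using g0_pos a_pos by (intro mult_pos_pos) (auto intro!: powr_less_mono2_neg)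
  have Y2: "Yt L 2 = 2" and Y3: "Yt L 3 = 3" unfolding Yt_def using assms by auto
  have "Dm p (\<lambda>k. Yt L k - \<nu>) 2 = (\<Sum>k\<le>z. pmf p k * (Yt L k - \<nu>)^2)" unfolding Dm_def by (rule Esum)
  also have "\<dots> \<ge> (\<Sum>k\<in>{2,3}. pmf p k * (Yt L k - \<nu>)^2)"
    using assms by (intro sum_mono2) auto
  also have "(\<Sum>k\<in>{2,3}. pmf p k * (Yt L k - \<nu>)^2) = pmf p 2 * (2 - \<nu>)^2 + pmf p 3 * (3 - \<nu>)^2"
    using Y2 Y3 by simp
  also have "\<dots> \<ge> p2 * (2 - \<nu>)^2 + p3 * (3 - \<nu>)^2"
    using P2 P3 by (intro add_mono mult_right_mono) auto
  also have "p2 * (2 - \<nu>)^2 + p3 * (3 - \<nu>)^2 \<ge> min p2 p3 * ((2 - \<nu>)^2 + (3 - \<nu>)^2)"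
    by (simp add: distrib_left add_mono mult_right_mono)
  also have "min p2 p3 * ((2 - \<nu>)^2 + (3 - \<nu>)^2) \<ge> min p2 p3 * (1/2)"
  proof (intro mult_left_mono)
    have "0 \<le> (2 * \<nu> - 5)^2" by simp
    thus "1/2 \<le> (2 - \<nu>)^2 + (3 - \<nu>)^2" by (simp add: power2_eq_square algebra_simps)
  qed (use p2p p3p in auto)
  finally show ?thesis unfolding p2_def p3_def \<nu>_def by simp
qed

end


context cls begin

lemma EY4_gen:
  assumes "0 < L" "0 \<le> s" "s \<le> 4"
  shows "E p (\<lambda>k. (Yt L k)^4) \<le> L powr (4 - s) * E p (\<lambda>k. real k powr s)"
proof -
  have "E p (\<lambda>k. (Yt L k)^4) \<le> E p (\<lambda>k. L powr (4 - s) * real k powr s)"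
  proof (intro E_mono_fin fin)
    fix k
    define y where "y = Yt L k"
    have y0: "0 \<le> y" "y \<le> L" "y \<le> real k" unfolding y_def Yt_def using assms by auto
    show "(Yt L k)^4 \<le> L powr (4 - s) * real k powr s"
    proof (cases "y = 0")
      case True thus ?thesis unfolding y_def using assms by simp
    next
      case False
      hence yp: "0 < y" using y0 by simp
      have "(Yt L k)^4 = y powr 4" unfolding y_def[symmetric] using yp by (simp add: powr_realpow)
      also have "\<dots> = y powr (4 - s) * y powr s" by (simp add: powr_add[symmetric])
      also have "\<dots> \<le> L powr (4 - s) * real k powr s"
        using y0 assms by (intro mult_mono powr_mono2) auto
      finally show ?thesis .
    qed
  qed
  also have "\<dots> = L powr (4 - s) * E p (\<lambda>k. real k powr s)" by simp
  finally show ?thesis .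
qed

lemma munu_gen:
  assumes "0 < L" "1 \<le> s"
  shows "E p (\<lambda>k. real k - Yt L k) \<le> L powr (1 - s) * E p (\<lambda>k. real k powr s)"
proof -
  have "E p (\<lambda>k. real k - Yt L k) \<le> E p (\<lambda>k. L powr (1 - s) * real k powr s)"
  proof (intro E_mono_fin fin)
    fix k
    show "real k - Yt L k \<le> L powr (1 - s) * real k powr s"
    proof (cases "real k \<le> L")
      case True thus ?thesis unfolding Yt_def by simp
    next
      case False
      hence kp: "0 < real k" "L < real k" using assms by auto
      have "real k - Yt L k \<le> real k" unfolding Yt_def using assms by auto
      also have "real k = real k powr (1 - s) * real k powr s" using kp by (simp add: powr_add[symmetric])
      also have "\<dots> \<le> L powr (1 - s) * real k powr s"
        using kp assms by (intro mult_right_mono powr_mono2') auto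
      finally show ?thesis .
    qed
  qed
  also have "\<dots> = L powr (1 - s) * E p (\<lambda>k. real k powr s)" by simp
  finally show ?thesis .
qed

lemma pw3: "0 < x \<Longrightarrow> (x::real) powr (-3) * x^4 = x"
proof -
  assume x: "0 < x"
  have "x powr (-3) * x^4 = x powr (-3) * x powr 4" using x by (simp add: powr_realpow)
  also have "\<dots> = x powr 1" by (simp add: powr_add[symmetric])
  finally show ?thesis using x by simp
qed

lemma pw3b: "0 < x \<Longrightarrow> (x::real) powr (-3) * x = 1 / x^2"
proof -
  assume x: "0 < x"
  have "x powr (-3) * x = x powr (-3) * x powr 1" using x by simp
  also have "\<dots> = x powr (-3 + 1)" by (rule powr_add[symmetric])
  also have "\<dots> = 1 / x^2" using x by (simp add: powr_minus_divide powr_realpow)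
  finally show ?thesis .
qed

lemma EY4_k2:
  assumes "a = 2" "1 \<le> L"
  shows "E p (\<lambda>k. (Yt L k)^4) \<le> (2 + 5 * B) * L^2"
proof -
  define m where "m = nat \<lfloor>L\<rfloor>"
  have m: "real m \<le> L" "L < real m + 1" "1 \<le> m" unfolding m_def using assms by linarith+
  have pt: "pmf p k * (Yt L k)^4 \<le> (if k \<le> m then 1 + 2 * B * L else 0) + (if m < k then pmf p k * L^4 else 0)" for k
  proof (cases "k \<le> m")
    case True
    hence Yk: "Yt L k = real k" unfolding Yt_def using m by auto
    show ?thesis
    proof (cases "k < 2")
      case True
      hence "(real k)^4 \<le> 1" by (cases k) (auto simp: less_Suc_eq)
      hence "pmf p k * (real k)^4 \<le> 1 * 1" by (intro mult_mono) (auto simp: pmf_le_1)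
      moreover have "0 \<le> 2 * B * L" using B_pos assms by simp
      ultimately show ?thesis using Yk \<open>k \<le> m\<close> by simp
    next
      case False
      have "pmf p k * (real k)^4 \<le> (B * a * real k powr (-a-1)) * (real k)^4"
        using upper2 False by (intro mult_right_mono) auto
      also have "\<dots> = B * 2 * (real k powr (-3) * (real k)^4)" using assms by simp
      also have "\<dots> = B * (2 * real k)" using False by (subst pw3) auto
      also have "B * (2 * real k) \<le> 2 * B * L" using m True B_pos by simp
      finally show ?thesis using Yk True by simp
    qed
  next
    case False
    have "(Yt L k)^4 \<le> L^4" unfolding Yt_def using assms by (intro power_mono) auto
    hence "pmf p k * (Yt L k)^4 \<le> pmf p k * L^4" by (intro mult_left_mono) auto
    thus ?thesis using False by simp
  qed
  have "E p (\<lambda>k. (Yt L k)^4) = (\<Sum>k\<le>z. pmf p k * (Yt L k)^4)" by (rule Esum)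
  also have "\<dots> \<le> (\<Sum>k\<le>z. (if k \<le> m then 1 + 2 * B * L else 0) + (if m < k then pmf p k * L^4 else 0))"
    by (intro sum_mono pt)
  also have "\<dots> = (\<Sum>k\<le>z. (if k \<le> m then 1 + 2 * B * L else 0)) + (\<Sum>k\<le>z. (if m < k then pmf p k * L^4 else 0))"
    by (rule sum.distrib)
  also have "(\<Sum>k\<le>z. (if k \<le> m then 1 + 2 * B * L else 0)) \<le> (\<Sum>k\<le>m. 1 + 2 * B * L)"
  proof -
    have "(\<Sum>k\<le>z. (if k \<le> m then 1 + 2 * B * L else 0)) = (\<Sum>k\<in>{..z} \<inter> {..m}. 1 + 2 * B * L)"
      by (subst sum.inter_restrict) auto
    also have "\<dots> \<le> (\<Sum>k\<le>m. 1 + 2 * B * L)"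
      using B_pos assms by (intro sum_mono2) auto
    finally show ?thesis .
  qed
  also have "(\<Sum>k\<le>m. 1 + 2 * B * L) = (real m + 1) * (1 + 2 * B * L)" by simp
  also have "(\<Sum>k\<le>z. (if m < k then pmf p k * L^4 else 0)) = (\<Sum>k\<in>{Suc m..z}. pmf p k) * L^4"
    by (subst sum_distrib_right, rule sum.mono_neutral_cong_right) auto
  also have "(\<Sum>k\<in>{Suc m..z}. pmf p k) \<le> B * real (Suc m) powr (-a)" using m by (intro tail_sum) auto
  also have "B * real (Suc m) powr (-a) \<le> B / L^2"
  proof -
    have "real (Suc m) powr (-a) = 1 / (real m + 1)^2" using assms by (simp add: powr_minus_divide powr_realpow add.commute)
    also have "\<dots> \<le> 1 / L^2" using m assms by (intro divide_left_mono power_mono) auto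
    finally show ?thesis using B_pos by (simp add: divide_inverse mult_left_mono)
  qed
  finally have "E p (\<lambda>k. (Yt L k)^4) \<le> (real m + 1) * (1 + 2 * B * L) + B / L^2 * L^4"
    using assms by (simp add: mult_right_mono)
  moreover have "(real m + 1) * (1 + 2 * B * L) \<le> (2 * L) * (1 + 2 * B * L)"
    using m assms B_pos by (intro mult_right_mono) auto
  moreover have "B / L^2 * L^4 = B * L^2" using assms by (simp add: power2_eq_square power4_eq_xxxx)
  moreover have "(2 * L) * (1 + 2 * B * L) + B * L^2 \<le> (2 + 5 * B) * L^2"
  proof -
    have "2 * L \<le> 2 * L^2" using assms by (simp add: power2_eq_square)
    thus ?thesis by (simp add: algebra_simps power2_eq_square)
  qed
  ultimately show ?thesis by linarith
qed

end


context cls begin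

lemma munu_k2:
  assumes "a = 2" "1 \<le> L"
  shows "E p (\<lambda>k. real k - Yt L k) \<le> 4 * B / L"
proof -
  define m where "m = nat \<lfloor>L\<rfloor>"
  have m: "real m \<le> L" "L < real m + 1" "1 \<le> m" unfolding m_def using assms by linarith+
  have pt: "pmf p k * (real k - Yt L k) \<le> (if m < k then 2 * B * (2 * (1 / real k - 1 / (real k + 1))) else 0)" for k
  proof (cases "m < k")
    case True
    hence k: "2 \<le> k" using m by auto
    have "pmf p k * (real k - Yt L k) \<le> pmf p k * real k"
      unfolding Yt_def using assms by (intro mult_left_mono) auto
    also have "\<dots> \<le> (B * a * real k powr (-a-1)) * real k"
      using upper2 k by (intro mult_right_mono) auto
    also have "\<dots> = 2 * B * (real k powr (-3) * real k)" using assms by simp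
    also have "\<dots> = 2 * B * (1 / (real k)^2)" using k by (subst pw3b) auto
    also have "1 / (real k)^2 \<le> 2 * (1 / real k - 1 / (real k + 1))"
    proof -
      have "1 / real k - 1 / (real k + 1) = 1 / (real k * (real k + 1))" using k by (simp add: field_simps)
      moreover have "1 / (real k)^2 \<le> 2 / (real k * (real k + 1))"
        using k by (simp add: divide_simps power2_eq_square)
      ultimately show ?thesis by simp
    qed
    hence "2 * B * (1 / (real k)^2) \<le> 2 * B * (2 * (1 / real k - 1 / (real k + 1)))"
      using B_pos by (intro mult_left_mono) auto
    finally show ?thesis using True by simp
  next
    case False
    hence "Yt L k = real k" unfolding Yt_def using m by auto
    thus ?thesis using False by simp
  qed
  have "E p (\<lambda>k. real k - Yt L k) = (\<Sum>k\<le>z. pmf p k * (real k - Yt L k))" by (rule Esum)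
  also have "\<dots> \<le> (\<Sum>k\<le>z. (if m < k then 2 * B * (2 * (1 / real k - 1 / (real k + 1))) else 0))"
    by (intro sum_mono pt)
  also have "\<dots> = (\<Sum>k\<in>{Suc m..z}. 2 * B * (2 * (1 / real k - 1 / (real k + 1))))"
    by (rule sum.mono_neutral_cong_right) auto
  also have "\<dots> = 4 * B * (\<Sum>k\<in>{Suc m..z}. (1 / real k - 1 / real (Suc k)))"
    by (simp add: sum_distrib_left algebra_simps)
  also have "\<dots> \<le> 4 * B * (1 / L)"
  proof (intro mult_left_mono)
    show "(\<Sum>k\<in>{Suc m..z}. (1 / real k - 1 / real (Suc k))) \<le> 1 / L"
    proof (cases "Suc m \<le> z")
      case True
      have "(\<Sum>k\<in>{Suc m..z}. (1 / real k - 1 / real (Suc k))) = 1 / real (Suc m) - 1 / real (Suc z)"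
        using sum_Suc_diff[of "Suc m" z "\<lambda>k. - (1 / real k)"] True by simp
      also have "\<dots> \<le> 1 / real (Suc m)" by simp
      also have "\<dots> \<le> 1 / L" using m assms by (intro divide_left_mono) auto
      finally show ?thesis .
    next
      case False thus ?thesis using assms by simp
    qed
  qed (use B_pos in auto)
  finally show ?thesis by simp
qed

lemma EY2_k2:
  assumes "a = 2" "1 \<le> L"
  shows "g0 * ln ((real (min (nat \<lfloor>L\<rfloor>) z) + 2) / 3) \<le> E p (\<lambda>k. (Yt L k)^2)"
proof -
  define m where "m = nat \<lfloor>L\<rfloor>"
  define K where "K = min m z"
  have m: "real m \<le> L" "L < real m + 1" "1 \<le> m" unfolding m_def using assms by linarith+
  have "E p (\<lambda>k. (Yt L k)^2) = (\<Sum>k\<le>z. pmf p k * (Yt L k)^2)" by (rule Esum)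
  also have "\<dots> \<ge> (\<Sum>k\<in>{2..K}. pmf p k * (Yt L k)^2)"
    unfolding K_def by (intro sum_mono2) auto
  also have "(\<Sum>k\<in>{2..K}. pmf p k * (Yt L k)^2) \<ge> (\<Sum>k\<in>{2..K}. g0 * (1 / (real k + 1)))"
  proof (intro sum_mono)
    fix k assume k: "k \<in> {2..K}"
    have Yk: "Yt L k = real k" unfolding Yt_def using k m by (auto simp: K_def)
    have "g0 * (real k powr (-a) - real (k+1) powr (-a)) \<le> pmf p k"
      using k by (intro lower) (auto simp: K_def)
    also have "real k powr (-a) - real (k+1) powr (-a) = 1 / (real k)^2 - 1 / (real k + 1)^2"
      using assms k by (simp add: powr_minus_divide powr_realpow add.commute)
    finally have A: "g0 * (1 / (real k)^2 - 1 / (real k + 1)^2) * (real k)^2 \<le> pmf p k * (real k)^2"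
      by (intro mult_right_mono) auto
    have B: "(1 / (real k)^2 - 1 / (real k + 1)^2) * (real k)^2 = 1 - (real k / (real k + 1))^2"
      using k by (simp add: field_simps power2_eq_square)
    have C: "(real k / (real k + 1))^2 \<le> real k / (real k + 1)"
    proof -
      have x1: "real k / (real k + 1) \<le> 1" by (simp add: divide_le_eq)
      have "(real k / (real k + 1)) * (real k / (real k + 1)) \<le> 1 * (real k / (real k + 1))"
        using x1 by (intro mult_right_mono) auto
      thus ?thesis by (simp add: power2_eq_square)
    qed
    have D: "1 - real k / (real k + 1) = 1 / (real k + 1)" by (simp add: field_simps)
    have "g0 * (1 / (real k + 1)) \<le> g0 * (1 - (real k / (real k + 1))^2)"
      using C D g0_pos by (intro mult_left_mono) auto
    also have "\<dots> \<le> pmf p k * (real k)^2" using A B by (simp add: mult.assoc)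
    finally show "g0 * (1 / (real k + 1)) \<le> pmf p k * (Yt L k)^2" using Yk by simp
  qed
  also have "(\<Sum>k\<in>{2..K}. g0 * (1 / (real k + 1))) = g0 * (\<Sum>k\<in>{2..K}. 1 / (real k + 1))"
    by (simp add: sum_distrib_left)
  also have "g0 * (\<Sum>k\<in>{2..K}. 1 / (real k + 1)) \<ge> g0 * ln ((real K + 2) / 3)"
    using g0_pos by (intro mult_left_mono harm_ln) auto
  finally show ?thesis unfolding K_def m_def .
qed

end


lemma ev_real_ge: "\<forall>\<^sub>F N in sequentially. c \<le> real N"
proof (rule eventually_sequentiallyI[of "nat \<lceil>c\<rceil>"])
  fix N assume "nat \<lceil>c\<rceil> \<le> N"
  hence "real (nat \<lceil>c\<rceil>) \<le> real N" by simp
  moreover have "c \<le> real (nat \<lceil>c\<rceil>)" by (rule real_nat_ceiling_ge)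
  ultimately show "c \<le> real N" by linarith
qed

lemma Zs_nonneg: "1 < r \<Longrightarrow> 0 \<le> Zs r"
  unfolding Zs_def by (intro suminf_nonneg) (auto simp: summable_real_powr_iff)

locale kap =
  fixes \<kappa> :: real and pk :: "nat \<Rightarrow> nat pmf" and \<zeta> :: "nat \<Rightarrow> nat" and gk fk :: "nat \<Rightarrow> real"
    and Bk g0k d :: real
  assumes kappa: "2 \<le> \<kappa>"
    and clsk: "\<And>N. cls (pk N) \<kappa> (\<zeta> N) gk fk Bk g0k"
    and meank: "\<forall>\<^sub>F N in sequentially. E (pk N) real > 2"
    and d_pos: "0 < d"
    and zeta_lin: "\<forall>\<^sub>F N in sequentially. d * real N \<le> real (\<zeta> N)"
begin

lemma Bk_pos: "0 < Bk" using cls.B_pos[OF clsk] .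
lemma g0k_pos: "0 < g0k" using cls.g0_pos[OF clsk] .

lemma ev_zeta: "\<forall>\<^sub>F N in sequentially. c \<le> real (\<zeta> N)"
proof -
  have "\<forall>\<^sub>F N in sequentially. c / d \<le> real N" by (rule ev_real_ge)
  thus ?thesis using zeta_lin
  proof eventually_elim
    case (elim N)
    hence "c \<le> d * real N" using d_pos by (simp add: divide_le_eq mult.commute)
    thus ?case using elim by linarith
  qed
qed

definition sk where "sk = 2 + min (\<kappa> - 2) 1 / 2"
definition Ms where "Ms = 2 + Bk * \<kappa> * Zs (\<kappa> + 1 - sk)"
definition Cmu where "Cmu = 2 + Bk * \<kappa> * Zs \<kappa>"
definition s0k where "s0k = min (g0k * (2 powr (-\<kappa>) - 3 powr (-\<kappa>))) (g0k * (3 powr (-\<kappa>) - 4 powr (-\<kappa>))) / 2"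

lemma s0k_pos: "0 < s0k"
proof -
  have "0 < g0k * (2 powr (-\<kappa>) - 3 powr (-\<kappa>))" using g0k_pos kappa
    by (intro mult_pos_pos) (auto intro!: powr_less_mono2_neg)
  moreover have "0 < g0k * (3 powr (-\<kappa>) - 4 powr (-\<kappa>))" using g0k_pos kappa
    by (intro mult_pos_pos) (auto intro!: powr_less_mono2_neg)
  ultimately show ?thesis unfolding s0k_def by simp
qed

lemma mu_le: "E (pk N) real \<le> Cmu"
  unfolding Cmu_def using cls.mu_bound[OF clsk] kappa by auto

lemma AC_gt2:
  assumes k2: "2 < \<kappa>"
  shows "\<exists>pc>0. \<forall>\<^sub>F N in sequentially.
     pc \<le> E (Pi_pmf {1..<N} 0 (\<lambda>_. pk N)) (\<lambda>y. if 2 * (N - 1) \<le> (\<Sum>i\<in>{1..<N}. y i) then 1 else 0)"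
proof -
  define s where "s = sk"
  have s: "2 < s" "s < \<kappa>" "s \<le> 3" unfolding s_def sk_def using k2 by (auto simp: min_def field_simps)
  define C4 where "C4 = 2 * Ms + Cmu^4"
  have Ms0: "0 \<le> Ms" unfolding Ms_def using Bk_pos kappa Zs_nonneg[of "\<kappa> + 1 - sk"] s unfolding s_def by simp
  have C40: "0 \<le> C4" unfolding C4_def using Ms0 by simp
  define R0 where "R0 = C4 / s0k^3 + 3 / s0k"
  define e where "e = (6 - 3 * s) / (4 - s)"
  have e: "e < 0" unfolding e_def using s by (simp add: divide_neg_pos)
  define LL where "LL = (\<lambda>N::nat. real N powr (1 / (4 - s)))"
  have R00: "0 \<le> R0" unfolding R0_def using C40 s0k_pos by auto
  have ev1: "\<forall>\<^sub>F N in sequentially. 16 * R0 * Ms^2 * real N powr e \<le> 1"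
  proof -
    define K0 where "K0 = 16 * R0 * Ms^2"
    have K0: "0 \<le> K0" unfolding K0_def using R00 by simp
    have "((\<lambda>N. real N powr e) \<longlongrightarrow> 0) sequentially"
      by (rule tendsto_neg_powr[OF e filterlim_real_sequentially])
    hence "\<forall>\<^sub>F N in sequentially. real N powr e < 1 / (K0 + 1)"
      using K0 by (intro order_tendstoD(2)) auto
    thus ?thesis
    proof eventually_elim
      case (elim N)
      have "K0 * real N powr e \<le> K0 * (1 / (K0 + 1))" using elim K0 by (intro mult_left_mono) auto
      also have "\<dots> \<le> 1" using K0 by (simp add: divide_le_eq)
      finally show ?case unfolding K0_def .
    qed
  qed
  have ev2: "\<forall>\<^sub>F N in sequentially. 3 \<le> LL N"
    using ev_real_ge[of "3 powr (4 - s)"]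
  proof eventually_elim
    case (elim N)
    have "3 = (3 powr (4 - s)) powr (1 / (4 - s))" using s by (simp add: powr_powr)
    also have "\<dots> \<le> real N powr (1 / (4 - s))" using elim s by (intro powr_mono2) auto
    finally show ?case unfolding LL_def .
  qed
  show ?thesis
  proof (intro exI[of _ "s0k^2 / (16 * (C4 + 3 * s0k^2))"] conjI)
    show "0 < s0k^2 / (16 * (C4 + 3 * s0k^2))" using s0k_pos C40 by (auto intro!: divide_pos_pos add_nonneg_pos)
    show "\<forall>\<^sub>F N in sequentially. s0k^2 / (16 * (C4 + 3 * s0k^2)) \<le> E (Pi_pmf {1..<N} 0 (\<lambda>_. pk N)) (\<lambda>y. if 2 * (N - 1) \<le> (\<Sum>i\<in>{1..<N}. y i) then 1 else 0)"
      using ev1 ev2 meank ev_zeta[of 3] eventually_ge_at_top[of 2]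
    proof eventually_elim
      case (elim N)
      interpret c: cls "pk N" \<kappa> "\<zeta> N" gk fk Bk g0k by (rule clsk)
      define L where "L = LL N"
      define \<nu> where "\<nu> = E (pk N) (Yt L)"
      define \<mu> where "\<mu> = E (pk N) real"
      define \<sigma> where "\<sigma> = Dm (pk N) (\<lambda>k. Yt L k - E (pk N) (Yt L)) 2"
      define n where "n = real (N - 1)"
      have N2: "2 \<le> N" using elim by simp
      have Npos: "0 < real N" using N2 by simp
      have n1: "1 \<le> n" "real N \<le> 2 * n" unfolding n_def using N2 by auto
      have L3: "3 \<le> L" using elim unfolding L_def by simp
      have LN: "L powr (4 - s) = real N"
        unfolding L_def LL_def using s Npos by (simp add: powr_powr)
      have L1s: "(L powr (1 - s))^2 = real N powr (2 * (1 - s) / (4 - s))"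
        unfolding L_def LL_def using s Npos by (simp add: powr_powr powr_power)
      have mom: "E (pk N) (\<lambda>k. real k powr s) \<le> Ms"
        unfolding Ms_def s_def using c.moment[of sk] s unfolding s_def by simp
      have mu0: "0 \<le> \<mu>" "\<mu> \<le> Cmu" unfolding \<mu>_def using c.mu_nonneg mu_le by auto
      have sig: "s0k \<le> \<sigma>" unfolding \<sigma>_def s0k_def using c.sig_lower[of L] elim L3 by simp
      have m4: "Dm (pk N) (\<lambda>k. Yt L k - E (pk N) (Yt L)) 4 \<le> C4 * real (N - 1)"
      proof -
        have "Dm (pk N) (\<lambda>k. Yt L k - E (pk N) (Yt L)) 4 \<le> E (pk N) (\<lambda>k. (Yt L k)^4) + \<mu>^4"
          unfolding \<mu>_def using c.m4_le L3 by simp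
        also have "E (pk N) (\<lambda>k. (Yt L k)^4) \<le> L powr (4 - s) * E (pk N) (\<lambda>k. real k powr s)"
          using c.EY4_gen[of L s] L3 s by simp
        also have "\<dots> \<le> real N * Ms" unfolding LN using mom Npos by (intro mult_left_mono) auto
        also have "\<mu>^4 \<le> Cmu^4" using mu0 by (intro power_mono) auto
        also have "real N * Ms + Cmu^4 \<le> C4 * n"
        proof -
          have "real N * Ms \<le> 2 * n * Ms" using n1 Ms0 by (intro mult_right_mono) auto
          moreover have "Cmu^4 \<le> n * Cmu^4" using n1 by (simp add: mult_le_cancel_right1)
          ultimately show ?thesis unfolding C4_def by (simp add: algebra_simps)
        qed
        finally show ?thesis unfolding n_def by simp
      qed
      have tb: "16 * (n * (\<mu> - \<nu>))^2 * (C4 + 3 * \<sigma>^2) \<le> n * \<sigma>^3"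
      proof -
        have d0: "0 \<le> \<mu> - \<nu>" unfolding \<mu>_def \<nu>_def using c.nu_le_mu by simp
        have "\<mu> - \<nu> \<le> L powr (1 - s) * E (pk N) (\<lambda>k. real k powr s)"
          unfolding \<mu>_def \<nu>_def c.mu_nu_eq using c.munu_gen[of L s] L3 s by simp
        also have "\<dots> \<le> L powr (1 - s) * Ms" using mom by (intro mult_left_mono) auto
        finally have "(\<mu> - \<nu>)^2 \<le> (L powr (1 - s) * Ms)^2" using d0 by (intro power_mono) auto
        also have "\<dots> = real N powr (2 * (1 - s) / (4 - s)) * Ms^2" using L1s by (simp add: power_mult_distrib)
        finally have A: "(\<mu> - \<nu>)^2 \<le> real N powr (2 * (1 - s) / (4 - s)) * Ms^2" .
        have "n * (\<mu> - \<nu>)^2 \<le> real N * (real N powr (2 * (1 - s) / (4 - s)) * Ms^2)"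
          using A n1 unfolding n_def by (intro mult_mono) auto
        also have "\<dots> = real N powr e * Ms^2"
        proof -
          have "real N * real N powr (2 * (1 - s) / (4 - s)) = real N powr (1 + 2 * (1 - s) / (4 - s))"
            using Npos by (simp add: powr_mult_base)
          also have "1 + 2 * (1 - s) / (4 - s) = e" unfolding e_def using s by (simp add: field_simps)
          finally show ?thesis by simp
        qed
        finally have B: "n * (\<mu> - \<nu>)^2 \<le> real N powr e * Ms^2" .
        have C: "C4 + 3 * \<sigma>^2 \<le> R0 * \<sigma>^3"
        proof -
          have sp: "0 < \<sigma>" using sig s0k_pos by simp
          have "s0k^3 \<le> \<sigma>^3" using sig s0k_pos by (intro power_mono) auto
          hence "C4 * s0k^3 \<le> C4 * \<sigma>^3" using C40 by (intro mult_left_mono) auto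
          hence c1: "C4 \<le> C4 / s0k^3 * \<sigma>^3" using s0k_pos by (simp add: field_simps)
          have "3 * \<sigma>^2 * s0k \<le> 3 * \<sigma>^2 * \<sigma>" using sig by (intro mult_left_mono) auto
          hence c2: "3 * \<sigma>^2 \<le> 3 / s0k * \<sigma>^3" using s0k_pos by (simp add: field_simps power2_eq_square power3_eq_cube)
          show ?thesis unfolding R0_def using c1 c2 by (simp add: algebra_simps)
        qed
        have "16 * (n * (\<mu> - \<nu>))^2 * (C4 + 3 * \<sigma>^2) = 16 * n * (n * (\<mu> - \<nu>)^2) * (C4 + 3 * \<sigma>^2)"
          by (simp add: power2_eq_square algebra_simps)
        also have "\<dots> \<le> 16 * n * (real N powr e * Ms^2) * (R0 * \<sigma>^3)"
        proof -
          have "(n * (\<mu> - \<nu>)^2) * (C4 + 3 * \<sigma>^2) \<le> (real N powr e * Ms^2) * (R0 * \<sigma>^3)"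
            by (rule mult_mono[OF B C]) (use n1 sig s0k_pos C40 in auto)
          hence "(16 * n) * ((n * (\<mu> - \<nu>)^2) * (C4 + 3 * \<sigma>^2)) \<le> (16 * n) * ((real N powr e * Ms^2) * (R0 * \<sigma>^3))"
            using n1 by (intro mult_left_mono) auto
          thus ?thesis by (simp add: mult.assoc)
        qed
        also have "\<dots> = n * \<sigma>^3 * (16 * R0 * Ms^2 * real N powr e)" by (simp add: algebra_simps)
        also have "\<dots> \<le> n * \<sigma>^3 * 1"
          using elim n1 sig s0k_pos by (intro mult_left_mono) auto
        finally show ?thesis by simp
      qed
      show ?case
        using AC_cls[OF c.fin N2 _ s0k_pos C40, of L] elim sig m4 tb
        unfolding \<sigma>_def \<mu>_def \<nu>_def n_def by simp
    qed
  qed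
qed

lemma AC_eq2:
  assumes k2: "\<kappa> = 2"
  shows "\<exists>pc>0. \<forall>\<^sub>F N in sequentially.
     pc \<le> E (Pi_pmf {1..<N} 0 (\<lambda>_. pk N)) (\<lambda>y. if 2 * (N - 1) \<le> (\<Sum>i\<in>{1..<N}. y i) then 1 else 0)"
proof -
  define C4 where "C4 = 2 * (2 + 5 * Bk) + Cmu^4"
  have C40: "0 \<le> C4" unfolding C4_def using Bk_pos by simp
  define T where "T = max 1 (256 * Bk^2 * (C4 + 3))"
  define X0 where "X0 = exp ((T + Cmu^2) / g0k)"
  have X0: "0 < X0" unfolding X0_def by simp
  have ev1: "\<forall>\<^sub>F N in sequentially. (3 * X0 + 1)^2 \<le> real N" by (rule ev_real_ge)
  show ?thesis
  proof (intro exI[of _ "1 / (16 * (C4 + 3))"] conjI)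
    show "0 < 1 / (16 * (C4 + 3))" using C40 by simp
    show "\<forall>\<^sub>F N in sequentially. 1 / (16 * (C4 + 3)) \<le> E (Pi_pmf {1..<N} 0 (\<lambda>_. pk N)) (\<lambda>y. if 2 * (N - 1) \<le> (\<Sum>i\<in>{1..<N}. y i) then 1 else 0)"
      using ev1 meank ev_zeta[of "3 * X0"] eventually_ge_at_top[of 2]
    proof eventually_elim
      case (elim N)
      interpret c: cls "pk N" \<kappa> "\<zeta> N" gk fk Bk g0k by (rule clsk)
      define L where "L = sqrt (real N)"
      define \<nu> where "\<nu> = E (pk N) (Yt L)"
      define \<mu> where "\<mu> = E (pk N) real"
      define \<sigma> where "\<sigma> = Dm (pk N) (\<lambda>k. Yt L k - E (pk N) (Yt L)) 2"
      define n where "n = real (N - 1)"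
      have N2: "2 \<le> N" using elim by simp
      have Npos: "0 < real N" using N2 by simp
      have n1: "1 \<le> n" "real N \<le> 2 * n" "n \<le> real N" unfolding n_def using N2 by auto
      have L1: "1 \<le> L" unfolding L_def using N2 by simp
      have L2: "L^2 = real N" unfolding L_def by simp
      have mu0: "0 \<le> \<mu>" "\<mu> \<le> Cmu" unfolding \<mu>_def using c.mu_nonneg mu_le by auto
      have nu0: "0 \<le> \<nu>" "\<nu> \<le> \<mu>" unfolding \<nu>_def \<mu>_def using c.nu_nonneg c.nu_le_mu L1 by auto
      have sigT: "T \<le> \<sigma>"
      proof -
        define K where "K = min (nat \<lfloor>L\<rfloor>) (\<zeta> N)"
        have "3 * X0 + 1 \<le> L"
        proof -
          have "sqrt ((3 * X0 + 1)^2) \<le> sqrt (real N)" using elim by (intro real_sqrt_le_mono) auto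
          thus ?thesis unfolding L_def using X0 by simp
        qed
        hence "3 * X0 \<le> real (nat \<lfloor>L\<rfloor>)" by linarith
        hence "3 * X0 \<le> real K" using elim unfolding K_def by auto
        hence "X0 \<le> (real K + 2) / 3" by simp
        hence "ln X0 \<le> ln ((real K + 2) / 3)" using X0 by simp
        hence "(T + Cmu^2) / g0k \<le> ln ((real K + 2) / 3)" unfolding X0_def by simp
        hence "T + Cmu^2 \<le> g0k * ln ((real K + 2) / 3)" using g0k_pos by (simp add: divide_le_eq mult.commute)
        also have "\<dots> \<le> E (pk N) (\<lambda>k. (Yt L k)^2)" unfolding K_def using c.EY2_k2[OF k2 L1] .
        finally have "T + Cmu^2 \<le> E (pk N) (\<lambda>k. (Yt L k)^2)" .
        moreover have "\<nu>^2 \<le> Cmu^2" using nu0 mu0 by (intro power_mono) auto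
        ultimately show ?thesis unfolding \<sigma>_def c.sig_eq \<nu>_def by simp
      qed
      have T1: "1 \<le> T" "256 * Bk^2 * (C4 + 3) \<le> T" unfolding T_def by auto
      have sig1: "1 \<le> \<sigma>" using sigT T1 by simp
      have m4: "Dm (pk N) (\<lambda>k. Yt L k - E (pk N) (Yt L)) 4 \<le> C4 * real (N - 1)"
      proof -
        have "Dm (pk N) (\<lambda>k. Yt L k - E (pk N) (Yt L)) 4 \<le> E (pk N) (\<lambda>k. (Yt L k)^4) + \<mu>^4"
          unfolding \<mu>_def using c.m4_le L1 by simp
        also have "E (pk N) (\<lambda>k. (Yt L k)^4) \<le> (2 + 5 * Bk) * L^2" by (rule c.EY4_k2[OF k2 L1])
        also have "\<mu>^4 \<le> Cmu^4" using mu0 by (intro power_mono) auto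
        also have "(2 + 5 * Bk) * L^2 + Cmu^4 \<le> C4 * n"
        proof -
          have "(2 + 5 * Bk) * L^2 \<le> (2 + 5 * Bk) * (2 * n)" using n1 Bk_pos L2 by (intro mult_left_mono) auto
          moreover have "Cmu^4 \<le> n * Cmu^4" using n1 by (simp add: mult_le_cancel_right1)
          ultimately show ?thesis unfolding C4_def by (simp add: algebra_simps)
        qed
        finally show ?thesis unfolding n_def by simp
      qed
      have tb: "16 * (n * (\<mu> - \<nu>))^2 * (C4 + 3 * \<sigma>^2) \<le> n * \<sigma>^3"
      proof -
        have d0: "0 \<le> \<mu> - \<nu>" using nu0 by simp
        have "\<mu> - \<nu> \<le> 4 * Bk / L" unfolding \<mu>_def \<nu>_def c.mu_nu_eq using c.munu_k2[OF k2 L1] .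
        hence "(\<mu> - \<nu>)^2 \<le> (4 * Bk / L)^2" using d0 by (intro power_mono) auto
        also have "\<dots> = 16 * Bk^2 / real N" using L2 by (simp add: power_divide power_mult_distrib)
        finally have "n * (\<mu> - \<nu>)^2 \<le> n * (16 * Bk^2 / real N)" using n1 by (intro mult_left_mono) auto
        also have "\<dots> \<le> 16 * Bk^2"
        proof -
          have "n / real N \<le> 1" using n1 Npos by simp
          hence "16 * Bk^2 * (n / real N) \<le> 16 * Bk^2 * 1" by (intro mult_left_mono) auto
          thus ?thesis by (simp add: mult.commute)
        qed
        finally have B: "n * (\<mu> - \<nu>)^2 \<le> 16 * Bk^2" .
        have C: "C4 + 3 * \<sigma>^2 \<le> (C4 + 3) * \<sigma>^2"
        proof -
          have "1 \<le> \<sigma>^2" using sig1 by simp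
          hence "C4 * 1 \<le> C4 * \<sigma>^2" using C40 by (intro mult_left_mono) auto
          thus ?thesis by (simp add: algebra_simps)
        qed
        have "16 * (n * (\<mu> - \<nu>))^2 * (C4 + 3 * \<sigma>^2) = (16 * n) * ((n * (\<mu> - \<nu>)^2) * (C4 + 3 * \<sigma>^2))"
          by (simp add: power2_eq_square algebra_simps)
        also have "\<dots> \<le> (16 * n) * ((16 * Bk^2) * ((C4 + 3) * \<sigma>^2))"
        proof -
          have "(n * (\<mu> - \<nu>)^2) * (C4 + 3 * \<sigma>^2) \<le> (16 * Bk^2) * ((C4 + 3) * \<sigma>^2)"
            by (rule mult_mono[OF B C]) (use n1 C40 sig1 in auto)
          thus ?thesis using n1 by (intro mult_left_mono) auto
        qed
        also have "\<dots> = n * \<sigma>^2 * (256 * Bk^2 * (C4 + 3))" by (simp add: algebra_simps)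
        also have "\<dots> \<le> n * \<sigma>^2 * \<sigma>" using T1 sigT n1 by (intro mult_left_mono) auto
        also have "\<dots> = n * \<sigma>^3" by (simp add: power2_eq_square power3_eq_cube)
        finally show ?thesis .
      qed
      have sig1': "1 \<le> Dm (pk N) (\<lambda>k. Yt L k - E (pk N) (Yt L)) 2" using sig1 unfolding \<sigma>_def .
      show ?case
        using AC_cls[OF c.fin N2 _ _ C40 sig1' m4] elim tb
        unfolding \<sigma>_def \<mu>_def \<nu>_def n_def by simp
    qed
  qed
qed

lemma AC_final:
  "\<exists>pc>0. \<forall>\<^sub>F N in sequentially.
     pc \<le> E (Pi_pmf {1..<N} 0 (\<lambda>_. pk N)) (\<lambda>y. if 2 * (N - 1) \<le> (\<Sum>i\<in>{1..<N}. y i) then 1 else 0)"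
  using AC_gt2 AC_eq2 kappa by (cases "\<kappa> = 2") auto

end


context cls begin

lemma num_s:
  assumes "2 \<le> N" "0 \<le> s" "s \<le> 2" "s < a"
  shows "E (Pi_pmf {..<N} 0 (\<lambda>_. p)) (hN N) \<le> (real N powr (-s) * (2 + B * a * Zs (a + 1 - s)))^2"
proof -
  let ?P = "Pi_pmf {2..<N} 0 (\<lambda>_. p)"
  have "E (Pi_pmf {..<N} 0 (\<lambda>_. p)) (hN N) \<le> E ?P (\<lambda>y. phi p (max (2*N) (\<Sum>i\<in>{2..<N}. y i)) ^ 2)"
    using E_hN_bound[OF assms(1) fin] .
  also have "\<dots> \<le> E ?P (\<lambda>y. phi p N ^ 2)"
    using assms fin by (intro E_mono_fin finite_set_Pi_pmf power_mono phi_mono phi_nonneg) auto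
  also have "\<dots> = phi p N ^ 2" by simp
  also have "\<dots> \<le> (real N powr (-s) * (2 + B * a * Zs (a + 1 - s)))^2"
  proof (intro power_mono)
    have "phi p N \<le> real N powr (-s) * E p (\<lambda>k. real k powr s)"
      using assms by (intro phi_powr fin) auto
    also have "\<dots> \<le> real N powr (-s) * (2 + B * a * Zs (a + 1 - s))"
      using moment[of s] assms by (intro mult_left_mono) auto
    finally show "phi p N \<le> real N powr (-s) * (2 + B * a * Zs (a + 1 - s))" .
  qed (rule phi_nonneg)
  finally show ?thesis .
qed

lemma num_a1:
  assumes "a = 1" "2 \<le> N" "0 < A"
  shows "E (Pi_pmf {..<N} 0 (\<lambda>_. p)) (hN N) \<le> (3 * B + 2)^2 * (1 / (real N * A)^2 +
      1 / (4 * (real N)^2) * (exp A * (exp (- (g0 / (2 * real N)) * ln ((real (min N z) + 2) / 3))) ^ (N - 2)))"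
proof -
  let ?P = "Pi_pmf {2..<N} 0 (\<lambda>_. p)"
  let ?R = "\<lambda>y. \<Sum>i\<in>{2..<N}. y i"
  have finP: "finite (set_pmf ?P)" using fin by (intro finite_set_Pi_pmf) auto
  have "E (Pi_pmf {..<N} 0 (\<lambda>_. p)) (hN N) \<le> E ?P (\<lambda>y. phi p (max (2*N) (?R y)) ^ 2)"
    using E_hN_bound[OF assms(2) fin] .
  also have "\<dots> \<le> E ?P (\<lambda>y. (3 * B + 2)^2 * (1 / real (max (2*N) (?R y))^2))"
  proof (intro E_mono_fin finP)
    fix y
    have "phi p (max (2*N) (?R y)) \<le> (3 * B + 2) / real (max (2*N) (?R y))"
      using assms by (intro phi_a1) auto
    hence "phi p (max (2*N) (?R y)) ^ 2 \<le> ((3 * B + 2) / real (max (2*N) (?R y)))^2"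
      using phi_nonneg by (intro power_mono) auto
    thus "phi p (max (2*N) (?R y)) ^ 2 \<le> (3 * B + 2)^2 * (1 / real (max (2*N) (?R y))^2)"
      by (simp add: power_divide)
  qed
  also have "\<dots> = (3 * B + 2)^2 * E ?P (\<lambda>y. 1 / real (max (2*N) (?R y))^2)"
    by (rule integral_mult_right_zero)
  finally have S1: "E (Pi_pmf {..<N} 0 (\<lambda>_. p)) (hN N) \<le> (3 * B + 2)^2 * E ?P (\<lambda>y. 1 / real (max (2*N) (?R y))^2)" .
  have "E ?P (\<lambda>y. 1 / real (max (2*N) (?R y))^2) \<le>
      E ?P (\<lambda>y. 1 / (real N * A)^2 + (if real (?R y) < real N * A then 1 / (4 * (real N)^2) else 0))"
    using assms by (intro E_mono_fin finP invM_bound) auto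
  also have "\<dots> = 1 / (real N * A)^2 + 1 / (4 * (real N)^2) * E ?P (\<lambda>y. if real (?R y) < real N * A then 1 else 0)"
  proof -
    have "E ?P (\<lambda>y. 1 / (real N * A)^2 + (if real (?R y) < real N * A then 1 / (4 * (real N)^2) else 0)) =
          E ?P (\<lambda>y. 1 / (real N * A)^2 + 1 / (4 * (real N)^2) * (if real (?R y) < real N * A then 1 else 0))"
      by (intro Bochner_Integration.integral_cong) auto
    also have "\<dots> = 1 / (real N * A)^2 + 1 / (4 * (real N)^2) * E ?P (\<lambda>y. if real (?R y) < real N * A then 1 else 0)"
      using finP by (simp add: integrable_measure_pmf_finite prob_space.prob_space measure_pmf.prob_space_axioms)
    finally show ?thesis .
  qed
  finally have S2: "E ?P (\<lambda>y. 1 / real (max (2*N) (?R y))^2) \<le> 1 / (real N * A)^2 + 1 / (4 * (real N)^2) * E ?P (\<lambda>y. if real (?R y) < real N * A then 1 else 0)" .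
  have S3: "E ?P (\<lambda>y. if real (?R y) < real N * A then 1 else 0) \<le> exp A * (E p (\<lambda>k. exp (- real k / real N))) ^ card {2..<N}"
    using assms fin by (intro prob_sum_small) auto
  have S4: "(E p (\<lambda>k. exp (- real k / real N))) ^ card {2..<N} \<le> (exp (- (g0 / (2 * real N)) * ln ((real (min N z) + 2) / 3))) ^ (N - 2)"
    using exp_bound_a1[OF assms(1), of N] assms by (auto intro!: power_mono E_nonneg_fin)
  define X where "X = (exp (- (g0 / (2 * real N)) * ln ((real (min N z) + 2) / 3))) ^ (N - 2)"
  have "E ?P (\<lambda>y. if real (?R y) < real N * A then 1 else 0) \<le> exp A * X"
    using S3 S4 unfolding X_def by (meson exp_ge_zero mult_left_mono order.trans)
  hence "1 / (4 * (real N)^2) * E ?P (\<lambda>y. if real (?R y) < real N * A then 1 else 0) \<le> 1 / (4 * (real N)^2) * (exp A * X)"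
    by (intro mult_left_mono) auto
  hence "E ?P (\<lambda>y. 1 / real (max (2*N) (?R y))^2) \<le> 1 / (real N * A)^2 + 1 / (4 * (real N)^2) * (exp A * X)"
    using S2 by linarith
  hence "(3 * B + 2)^2 * E ?P (\<lambda>y. 1 / real (max (2*N) (?R y))^2) \<le> (3 * B + 2)^2 * (1 / (real N * A)^2 + 1 / (4 * (real N)^2) * (exp A * X))"
    by (intro mult_left_mono) auto
  with S1 show ?thesis unfolding X_def by linarith
qed

end


lemma E_sumW:
  assumes "finite I" "finite (set_pmf q)"
  shows "E (Pi_pmf I 0 (\<lambda>_. q)) (\<lambda>y. real (\<Sum>i\<in>I. y i)) = real (card I) * E q real"
proof -
  have fP: "finite (set_pmf (Pi_pmf I 0 (\<lambda>_. q)))" using assms by (intro finite_set_Pi_pmf) auto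
  have "E (Pi_pmf I 0 (\<lambda>_. q)) (\<lambda>y. real (\<Sum>i\<in>I. y i)) = (\<Sum>i\<in>I. E (Pi_pmf I 0 (\<lambda>_. q)) (\<lambda>y. real (y i)))"
    using fP by (simp add: E_sum_fin)
  also have "\<dots> = (\<Sum>i\<in>I. E q real)"
  proof (intro sum.cong refl)
    fix i assume i: "i \<in> I"
    have "E (Pi_pmf I 0 (\<lambda>_. q)) (\<lambda>y. real (y i)) = E (map_pmf (\<lambda>y. y i) (Pi_pmf I 0 (\<lambda>_. q))) real"
      by simp
    also have "map_pmf (\<lambda>y. y i) (Pi_pmf I 0 (\<lambda>_. q)) = q" using Pi_pmf_component[OF assms(1), of i 0 "\<lambda>_. q"] i by simp
    finally show "E (Pi_pmf I 0 (\<lambda>_. q)) (\<lambda>y. real (y i)) = E q real" .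
  qed
  finally show ?thesis by simp
qed

context kap begin

lemma denom_final:
  "\<exists>cden>0. \<forall>\<^sub>F N in sequentially. cden \<le> E (Pi_pmf {..<N} 0 (\<lambda>_. pk N)) (nu1_fact2 N)"
proof -
  obtain pc where pc: "0 < pc" and evpc: "\<forall>\<^sub>F N in sequentially.
     pc \<le> E (Pi_pmf {1..<N} 0 (\<lambda>_. pk N)) (\<lambda>y. if 2 * (N - 1) \<le> (\<Sum>i\<in>{1..<N}. y i) then 1 else 0)"
    using AC_final by blast
  have Cmu0: "0 \<le> Cmu" using mu_le[of 0] cls.mu_nonneg[OF clsk, of 0] by linarith
  define K where "K = 2 * (2 + Cmu) / pc"
  have Kpos: "0 < K" unfolding K_def using pc Cmu0 by simp
  define p2 where "p2 = g0k * (2 powr (-\<kappa>) - 3 powr (-\<kappa>))"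
  have p2pos: "0 < p2" unfolding p2_def using g0k_pos kappa
    by (intro mult_pos_pos) (auto intro!: powr_less_mono2_neg)
  show ?thesis
  proof (intro exI[of _ "p2 * (4 / K^2) * (pc / 2)"] conjI)
    show "0 < p2 * (4 / K^2) * (pc / 2)" using p2pos Kpos pc by simp
    show "\<forall>\<^sub>F N in sequentially. p2 * (4 / K^2) * (pc / 2) \<le> E (Pi_pmf {..<N} 0 (\<lambda>_. pk N)) (nu1_fact2 N)"
      using evpc ev_zeta[of 2] eventually_ge_at_top[of 2]
    proof eventually_elim
      case (elim N)
      interpret c: cls "pk N" \<kappa> "\<zeta> N" gk fk Bk g0k by (rule clsk)
      let ?P = "Pi_pmf {1..<N} 0 (\<lambda>_. pk N)"
      let ?W = "\<lambda>y. \<Sum>i\<in>{1..<N}. y i"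
      have fP: "finite (set_pmf ?P)" using c.fin by (intro finite_set_Pi_pmf) auto
      have N1: "1 \<le> N" using elim by simp
      have pm2: "p2 \<le> pmf (pk N) 2" unfolding p2_def using c.lower[of 2] elim by simp
      have "E ?P (\<lambda>y. if real N * K < real (2 + ?W y) then 1 else 0) \<le> E ?P (\<lambda>y. real (2 + ?W y) / (real N * K))"
      proof (intro E_mono_fin fP)
        fix y show "(if real N * K < real (2 + ?W y) then 1 else 0) \<le> real (2 + ?W y) / (real N * K)"
        proof (cases "real N * K < real (2 + ?W y)")
          case True thus ?thesis using Kpos N1 by (simp add: divide_simps)
        next
          case False
          have "0 \<le> real (2 + ?W y) / (real N * K)" using Kpos by (intro divide_nonneg_nonneg of_nat_0_le_iff) auto
          thus ?thesis using False by (simp only: if_False)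
        qed
      qed
      also have "\<dots> = (2 + E ?P (\<lambda>y. real (?W y))) / (real N * K)"
        using fP by (simp add: integrable_measure_pmf_finite prob_space.prob_space measure_pmf.prob_space_axioms)
      also have "E ?P (\<lambda>y. real (?W y)) = real (N - 1) * E (pk N) real"
        using E_sumW[of "{1..<N}" "pk N"] c.fin by simp
      also have "\<dots> \<le> real N * Cmu" using mu_le[of N] c.mu_nonneg Cmu0 by (intro mult_mono) auto
      finally have "E ?P (\<lambda>y. if real N * K < real (2 + ?W y) then 1 else 0) \<le> (2 + real N * Cmu) / (real N * K)"
        using Kpos N1 by (simp add: divide_right_mono)
      also have "\<dots> \<le> (2 + Cmu) / K"
      proof -
        have "2 + real N * Cmu \<le> real N * (2 + Cmu)" using N1 by (simp add: algebra_simps)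
        hence "(2 + real N * Cmu) / (real N * K) \<le> real N * (2 + Cmu) / (real N * K)"
          using Kpos N1 by (intro divide_right_mono) auto
        thus ?thesis using N1 by simp
      qed
      also have "\<dots> = pc / 2" unfolding K_def using pc Cmu0 by (simp add: field_simps)
      finally have tailb: "E ?P (\<lambda>y. if real N * K < real (2 + ?W y) then 1 else 0) \<le> pc / 2" .
      have "E ?P (\<lambda>y. if 2 * (N - 1) \<le> ?W y then 1 else 0) - E ?P (\<lambda>y. if real N * K < real (2 + ?W y) then 1 else 0)
          = E ?P (\<lambda>y. (if 2 * (N - 1) \<le> ?W y then 1 else 0) - (if real N * K < real (2 + ?W y) then 1 else 0))"
        using fP by (simp add: integrable_measure_pmf_finite)
      also have "\<dots> \<le> E ?P (\<lambda>y. if 2 * (N - 1) \<le> ?W y \<and> real (2 + ?W y) \<le> K * real N then 1 else 0)"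
        by (intro E_mono_fin fP) (auto simp: mult.commute)
      finally have P2: "pc / 2 \<le> E ?P (\<lambda>y. if 2 * (N - 1) \<le> ?W y \<and> real (2 + ?W y) \<le> K * real N then 1 else 0)"
        using elim tailb by linarith
      have "p2 * (4 / K^2) * (pc / 2) \<le> pmf (pk N) 2 * (4 / K^2) * E ?P (\<lambda>y. if 2 * (N - 1) \<le> ?W y \<and> real (2 + ?W y) \<le> K * real N then 1 else 0)"
        using pm2 P2 p2pos Kpos pc by (intro mult_mono) auto
      also have "\<dots> \<le> E (Pi_pmf {..<N} 0 (\<lambda>_. pk N)) (nu1_fact2 N)"
        using denom_lower[OF N1 c.fin Kpos] .
      finally show ?case .
    qed
  qed
qed

end


lemma hN_nonneg: "0 \<le> hN N x"
proof -
  have h: "0 \<le> real k * (real k - 1)" for k by (cases k) auto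
  have "0 \<le> (real (x 0) * (real (x 0) - 1)) * (real (x 1) * (real (x 1) - 1))"
    using h[of "x 0"] h[of "x 1"] by (rule mult_nonneg_nonneg)
  thus ?thesis unfolding hN_def by (simp add: mult.assoc)
qed

lemma reduction:
  fixes \<epsilon> Aa Ak :: "nat \<Rightarrow> real" and pa pk :: "nat \<Rightarrow> nat pmf"
  assumes cden: "0 < cden"
    and ev_eps: "\<forall>\<^sub>F N in sequentially. 0 \<le> \<epsilon> N \<and> \<epsilon> N \<le> 1/2"
    and ev_den: "\<forall>\<^sub>F N in sequentially. cden \<le> E (Pi_pmf {..<N} 0 (\<lambda>_. pk N)) (nu1_fact2 N)"
    and fa: "\<And>N. finite (set_pmf (pa N))" and fk: "\<And>N. finite (set_pmf (pk N))"
    and ev_a: "\<forall>\<^sub>F N in sequentially. E (Pi_pmf {..<N} 0 (\<lambda>_. pa N)) (hN N) \<le> Aa N"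
    and ev_k: "\<forall>\<^sub>F N in sequentially. E (Pi_pmf {..<N} 0 (\<lambda>_. pk N)) (hN N) \<le> Ak N"
    and lim: "(\<lambda>N. real N ^ 3 * (\<epsilon> N * Aa N + Ak N)) \<longlonglongrightarrow> 0"
  shows "((\<lambda>N. real N ^ 2 / coal_cN N (envA_law N (\<epsilon> N) (pa N) (pk N)) *
            measure_pmf.expectation (envA_law N (\<epsilon> N) (pa N) (pk N))
              (\<lambda>x. real (x 0) * (real (x 0) - 1) * real (x 1) * (real (x 1) - 1)
                    / real (S_tot N x) ^ 4
                    * (if 2 * N \<le> S_tot N x then 1 else 0)))
          \<longlonglongrightarrow> 0)"
proof -
  have hfun: "(\<lambda>x. real (x 0) * (real (x 0) - 1) * real (x 1) * (real (x 1) - 1)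
                    / real (S_tot N x) ^ 4
                    * (if 2 * N \<le> S_tot N x then 1 else 0)) = hN N" for N
    unfolding hN_def by (rule ext) simp
  define Q where "Q = (\<lambda>N. real N ^ 2 / coal_cN N (envA_law N (\<epsilon> N) (pa N) (pk N)) *
            E (envA_law N (\<epsilon> N) (pa N) (pk N)) (hN N))"
  define U where "U = (\<lambda>N. (32 / cden) * (real N ^ 3 * (\<epsilon> N * Aa N + Ak N)))"
  have U: "U \<longlonglongrightarrow> 0" unfolding U_def by (rule tendsto_mult_right_zero[OF lim])
  have ev: "\<forall>\<^sub>F N in sequentially. 0 \<le> Q N \<and> Q N \<le> U N"
    using ev_eps ev_den ev_a ev_k eventually_ge_at_top[of 1]
  proof eventually_elim
    case (elim N)
    let ?Pa = "Pi_pmf {..<N} 0 (\<lambda>_. pa N)" and ?Pk = "Pi_pmf {..<N} 0 (\<lambda>_. pk N)"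
    have e: "0 \<le> \<epsilon> N" "\<epsilon> N \<le> 1/2" using elim by auto
    have fPa: "finite (set_pmf ?Pa)" and fPk: "finite (set_pmf ?Pk)"
      using fa fk by (auto intro!: finite_set_Pi_pmf)
    have Eh: "E (envA_law N (\<epsilon> N) (pa N) (pk N)) (hN N) = \<epsilon> N * E ?Pa (hN N) + (1 - \<epsilon> N) * E ?Pk (hN N)"
      using e fa fk by (intro E_envA) auto
    have Ev: "E (envA_law N (\<epsilon> N) (pa N) (pk N)) (nu1_fact2 N) = \<epsilon> N * E ?Pa (nu1_fact2 N) + (1 - \<epsilon> N) * E ?Pk (nu1_fact2 N)"
      using e fa fk by (intro E_envA) auto
    have ha0: "0 \<le> E ?Pa (hN N)" and hk0: "0 \<le> E ?Pk (hN N)" by (auto intro!: E_nonneg_fin hN_nonneg)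
    have na0: "0 \<le> E ?Pa (nu1_fact2 N)" by (auto intro!: E_nonneg_fin nu1_nonneg)
    define Ehh where "Ehh = E (envA_law N (\<epsilon> N) (pa N) (pk N)) (hN N)"
    define Ev' where "Ev' = E (envA_law N (\<epsilon> N) (pa N) (pk N)) (nu1_fact2 N)"
    have Ehh0: "0 \<le> Ehh" unfolding Ehh_def Eh using e ha0 hk0 by simp
    have Ehh_le: "Ehh \<le> \<epsilon> N * Aa N + Ak N"
    proof -
      have "(1 - \<epsilon> N) * E ?Pk (hN N) \<le> 1 * E ?Pk (hN N)" using e hk0 by (intro mult_right_mono) auto
      moreover have "\<epsilon> N * E ?Pa (hN N) \<le> \<epsilon> N * Aa N" using e elim by (intro mult_left_mono) auto
      ultimately show ?thesis unfolding Ehh_def Eh using elim by linarith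
    qed
    have Ev_ge: "cden / 2 \<le> Ev'"
    proof -
      have "(1/2) * cden \<le> (1 - \<epsilon> N) * E ?Pk (nu1_fact2 N)" using e elim cden by (intro mult_mono) auto
      moreover have "0 \<le> \<epsilon> N * E ?Pa (nu1_fact2 N)" using e na0 by simp
      ultimately show ?thesis unfolding Ev'_def Ev by linarith
    qed
    have Evpos: "0 < Ev'" using Ev_ge cden by linarith
    have N1: "1 \<le> real N" using elim by simp
    have coal: "coal_cN N (envA_law N (\<epsilon> N) (pa N) (pk N)) = Ev' / (8 * (2 * real N - 1))"
      unfolding coal_cN_def Ev'_def ..
    have QN: "Q N = real N ^ 2 * (8 * (2 * real N - 1)) / Ev' * Ehh"
      unfolding Q_def coal Ehh_def using N1 Evpos by (simp add: field_simps)
    have Q0: "0 \<le> Q N" unfolding QN using N1 Evpos Ehh0 by (intro mult_nonneg_nonneg divide_nonneg_nonneg) auto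
    have "Q N \<le> real N ^ 2 * (8 * (2 * real N)) / (cden / 2) * Ehh"
      unfolding QN
    proof (intro mult_right_mono Ehh0 frac_le)
      show "0 \<le> real N ^ 2 * (8 * (2 * real N))" by simp
      show "real N ^ 2 * (8 * (2 * real N - 1)) \<le> real N ^ 2 * (8 * (2 * real N))" by (intro mult_left_mono) auto
      show "0 < cden / 2" using cden by simp
      show "cden / 2 \<le> Ev'" by (rule Ev_ge)
    qed
    also have "\<dots> = (32 / cden) * (real N ^ 3) * Ehh" using cden by (simp add: field_simps power2_eq_square power3_eq_cube)
    also have "\<dots> \<le> (32 / cden) * (real N ^ 3) * (\<epsilon> N * Aa N + Ak N)"
      using Ehh_le cden by (intro mult_left_mono) auto
    finally show ?case using Q0 unfolding U_def by (simp add: mult.assoc)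
  qed
  have "Q \<longlonglongrightarrow> 0"
    by (rule tendsto_sandwich[OF _ _ tendsto_const U]) (use ev in \<open>auto elim: eventually_mono\<close>)
  thus ?thesis unfolding Q_def hfun .
qed


lemma lim_pl:
  assumes "0 < \<beta>"
  shows "(\<lambda>N. real N powr (-\<beta>) * (1 + ln (real N))) \<longlonglongrightarrow> 0"
proof -
  have a: "(\<lambda>N. real N powr (-\<beta>)) \<longlonglongrightarrow> 0"
    using assms by (intro tendsto_neg_powr filterlim_real_sequentially) auto
  have b: "(\<lambda>N. ln (real N) / real N powr \<beta>) \<longlonglongrightarrow> 0" using lim_ln_over_power[OF assms] .
  have "(\<lambda>N. real N powr (-\<beta>) + ln (real N) / real N powr \<beta>) \<longlonglongrightarrow> 0 + 0"
    by (intro tendsto_add a b)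
  moreover have "\<forall>\<^sub>F N in sequentially. real N powr (-\<beta>) + ln (real N) / real N powr \<beta> = real N powr (-\<beta>) * (1 + ln (real N))"
    using eventually_gt_at_top[of 0]
    by eventually_elim (simp add: powr_minus_divide field_simps)
  ultimately show ?thesis by (simp add: tendsto_cong)
qed

lemma lim_k: "(\<lambda>N. real N ^ 3 * (real N powr (-7/4) * M)^2) \<longlonglongrightarrow> 0"
proof -
  have "(\<lambda>N. M^2 * real N powr (-1/2)) \<longlonglongrightarrow> M^2 * 0"
    by (intro tendsto_mult tendsto_const tendsto_neg_powr filterlim_real_sequentially) auto
  moreover have "\<forall>\<^sub>F N in sequentially. M^2 * real N powr (-1/2) = real N ^ 3 * (real N powr (-7/4) * M)^2"
    using eventually_gt_at_top[of 0]
  proof eventually_elim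
    case (elim N)
    have e1: "real N ^ 3 = real N powr 3" using elim by (simp add: powr_numeral)
    have e2: "(real N powr (-7/4))^2 = real N powr (2 * (-7/4))" using elim by (subst powr_power) auto
    have e3: "real N powr 3 * real N powr (2 * (-7/4)) = real N powr (3 + 2 * (-7/4))" by (rule powr_add[symmetric])
    have e4: "(3::real) + 2 * (-7/4) = -1/2" by simp
    have "real N ^ 3 * (real N powr (-7/4) * M)^2 = M^2 * (real N ^ 3 * (real N powr (-7/4))^2)"
      by (simp only: power_mult_distrib ac_simps)
    also have "\<dots> = M^2 * real N powr (-1/2)" unfolding e1 e2 e3 e4 ..
    finally show ?case by simp
  qed
  ultimately show ?thesis by (simp add: tendsto_cong)
qed

lemma lim_a1: "(\<lambda>N. (1 + ln (real N)) / (ln (real N))^2) \<longlonglongrightarrow> 0"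
proof -
  have lnt: "filterlim (\<lambda>N. ln (real N)) at_top sequentially"
    by (rule filterlim_compose[OF ln_at_top filterlim_real_sequentially])
  have i1: "(\<lambda>N. inverse (ln (real N))) \<longlonglongrightarrow> 0"
    by (rule tendsto_inverse_0_at_top[OF lnt])
  have "(\<lambda>N. inverse (ln (real N)) * inverse (ln (real N)) + inverse (ln (real N))) \<longlonglongrightarrow> 0 * 0 + 0"
    by (intro tendsto_add tendsto_mult i1)
  moreover have "\<forall>\<^sub>F N in sequentially. inverse (ln (real N)) * inverse (ln (real N)) + inverse (ln (real N)) = (1 + ln (real N)) / (ln (real N))^2"
    using eventually_gt_at_top[of 1]
  proof eventually_elim
    case (elim N)
    hence "ln (real N) > 0" by simp
    thus ?case by (simp add: field_simps power2_eq_square)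
  qed
  ultimately show ?thesis by (simp add: tendsto_cong)
qed


lemma sandwich0:
  fixes f g :: "nat \<Rightarrow> real"
  assumes "\<forall>\<^sub>F N in sequentially. 0 \<le> f N \<and> f N \<le> g N" "g \<longlonglongrightarrow> 0"
  shows "f \<longlonglongrightarrow> 0"
  by (rule tendsto_sandwich[OF _ _ tendsto_const assms(2)]) (use assms(1) in \<open>auto elim: eventually_mono\<close>)

theorem lemma9:
  fixes \<alpha> \<kappa> c :: real
    and \<zeta> :: "nat \<Rightarrow> nat"
    and p\<alpha> p\<kappa> :: "nat \<Rightarrow> nat pmf"
    and g\<alpha> f\<alpha> g\<kappa> f\<kappa> :: "nat \<Rightarrow> real"
    and \<epsilon> :: "nat \<Rightarrow> real"
  assumes alpha: "1 \<le> \<alpha>" "\<alpha> < 2"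
    and kappa: "2 \<le> \<kappa>"
    and c_pos: "0 < c"
    and zeta: "liminf (\<lambda>N. ereal (real (\<zeta> N) / real N)) > 0"
    and bounds_\<alpha>: "admissible_bounds g\<alpha> f\<alpha>"
    and bounds_\<kappa>: "admissible_bounds g\<kappa> f\<kappa>"
    and class_\<alpha>: "\<And>N. in_class_L (p\<alpha> N) \<alpha> (\<zeta> N) g\<alpha> f\<alpha>"
    and class_\<kappa>: "\<And>N. in_class_L (p\<kappa> N) \<kappa> (\<zeta> N) g\<kappa> f\<kappa>"
    and mean_\<alpha>: "\<forall>\<^sub>F N in sequentially. measure_pmf.expectation (p\<alpha> N) real > 2"
    and mean_\<kappa>: "\<forall>\<^sub>F N in sequentially. measure_pmf.expectation (p\<kappa> N) real > 2"
    and eps: "\<And>N. \<epsilon> N = c * real N powr (\<alpha> - 2) * (if \<kappa> > 2 then 1 else ln (real N))"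
  shows "((\<lambda>N. real N ^ 2 / coal_cN N (envA_law N (\<epsilon> N) (p\<alpha> N) (p\<kappa> N)) *
            measure_pmf.expectation (envA_law N (\<epsilon> N) (p\<alpha> N) (p\<kappa> N))
              (\<lambda>x. real (x 0) * (real (x 0) - 1) * real (x 1) * (real (x 1) - 1)
                    / real (S_tot N x) ^ 4
                    * (if 2 * N \<le> S_tot N x then 1 else 0)))
          \<longlonglongrightarrow> 0)"
proof -
  obtain Ba where Ba: "0 < Ba" "\<forall>k. f\<alpha> k \<le> Ba \<and> 0 < g\<alpha> k \<and> g\<alpha> k \<le> f\<alpha> k" using adm_B[OF bounds_\<alpha>] by auto
  obtain g0a where g0a: "0 < g0a" "\<forall>k. g0a \<le> g\<alpha> k" using adm_g0[OF bounds_\<alpha>] by auto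
  obtain Bk where Bk: "0 < Bk" "\<forall>k. f\<kappa> k \<le> Bk \<and> 0 < g\<kappa> k \<and> g\<kappa> k \<le> f\<kappa> k" using adm_B[OF bounds_\<kappa>] by auto
  obtain g0k where g0k: "0 < g0k" "\<forall>k. g0k \<le> g\<kappa> k" using adm_g0[OF bounds_\<kappa>] by auto
  have clsa: "cls (p\<alpha> N) \<alpha> (\<zeta> N) g\<alpha> f\<alpha> Ba g0a" for N
    by unfold_locales (use class_\<alpha> alpha Ba g0a in auto)
  have clsk: "cls (p\<kappa> N) \<kappa> (\<zeta> N) g\<kappa> f\<kappa> Bk g0k" for N
    by unfold_locales (use class_\<kappa> kappa Bk g0k in auto)
  obtain d where d: "0 < d" "\<forall>\<^sub>F N in sequentially. d * real N \<le> real (\<zeta> N)"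
  proof -
    obtain r where r: "0 < ereal r" "ereal r < liminf (\<lambda>N. ereal (real (\<zeta> N) / real N))"
      using ereal_dense2[OF zeta] by blast
    have "\<forall>\<^sub>F N in sequentially. ereal r < ereal (real (\<zeta> N) / real N)"
      by (rule less_LiminfD[OF r(2)])
    hence "\<forall>\<^sub>F N in sequentially. r * real N \<le> real (\<zeta> N)"
      using eventually_gt_at_top[of 0]
    proof eventually_elim
      case (elim N)
      hence "r < real (\<zeta> N) / real N" by simp
      thus ?case using elim by (simp add: field_simps)
    qed
    thus ?thesis using r that by auto
  qed
  interpret K: kap \<kappa> p\<kappa> \<zeta> g\<kappa> f\<kappa> Bk g0k d
    by (rule kap.intro) (use kappa clsk mean_\<kappa> d in auto)
  obtain cden where cden: "0 < cden" "\<forall>\<^sub>F N in sequentially. cden \<le> E (Pi_pmf {..<N} 0 (\<lambda>_. p\<kappa> N)) (nu1_fact2 N)"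
    using K.denom_final by blast
  have eps_le: "\<forall>\<^sub>F N in sequentially. 0 \<le> \<epsilon> N \<and> \<epsilon> N \<le> c * (real N powr (-(2-\<alpha>)) * (1 + ln (real N)))"
    using eventually_ge_at_top[of 1]
  proof eventually_elim
    case (elim N)
    have l0: "0 \<le> ln (real N)" using elim by simp
    have "0 \<le> (if \<kappa> > 2 then 1 else ln (real N))" "(if \<kappa> > 2 then 1 else ln (real N)) \<le> 1 + ln (real N)"
      using l0 by auto
    moreover have "0 \<le> c * real N powr (\<alpha> - 2)" using c_pos by simp
    ultimately have "0 \<le> \<epsilon> N" "\<epsilon> N \<le> c * real N powr (\<alpha> - 2) * (1 + ln (real N))"
      unfolding eps by (simp_all add: mult_left_mono)
    thus ?case by (simp add: algebra_simps)
  qed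
  have limeps: "(\<lambda>N. c * (real N powr (-(2-\<alpha>)) * (1 + ln (real N)))) \<longlonglongrightarrow> 0"
    using tendsto_mult_right_zero[OF lim_pl[of "2 - \<alpha>"]] alpha by simp
  have ev_eps: "\<forall>\<^sub>F N in sequentially. 0 \<le> \<epsilon> N \<and> \<epsilon> N \<le> 1/2"
  proof -
    have "\<forall>\<^sub>F N in sequentially. c * (real N powr (-(2-\<alpha>)) * (1 + ln (real N))) < 1/2"
      by (rule order_tendstoD(2)[OF limeps]) simp
    thus ?thesis using eps_le by eventually_elim auto
  qed
  define Mk where "Mk = 2 + Bk * \<kappa> * Zs (\<kappa> + 1 - 7/4)"
  define Ak where "Ak = (\<lambda>N. (real N powr (-7/4) * Mk)^2)"
  have ev_k: "\<forall>\<^sub>F N in sequentially. E (Pi_pmf {..<N} 0 (\<lambda>_. p\<kappa> N)) (hN N) \<le> Ak N"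
    using eventually_ge_at_top[of 2]
  proof eventually_elim
    case (elim N)
    show ?case unfolding Ak_def Mk_def using cls.num_s[OF clsk elim, of "7/4"] kappa by simp
  qed
  have limk: "(\<lambda>N. real N ^ 3 * Ak N) \<longlonglongrightarrow> 0" unfolding Ak_def by (rule lim_k)
  show ?thesis
  proof (cases "\<alpha> = 1")
    case False
    hence a1: "1 < \<alpha>" using alpha by simp
    define sa where "sa = (1 + 3 * \<alpha>) / 4"
    have sa: "0 \<le> sa" "sa \<le> 2" "sa < \<alpha>" using a1 alpha unfolding sa_def by auto
    define Ma where "Ma = 2 + Ba * \<alpha> * Zs (\<alpha> + 1 - sa)"
    define Aa where "Aa = (\<lambda>N. (real N powr (-sa) * Ma)^2)"
    have ev_a: "\<forall>\<^sub>F N in sequentially. E (Pi_pmf {..<N} 0 (\<lambda>_. p\<alpha> N)) (hN N) \<le> Aa N"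
      using eventually_ge_at_top[of 2]
    proof eventually_elim
      case (elim N)
      show ?case unfolding Aa_def Ma_def using cls.num_s[OF clsa elim sa] .
    qed
    have l1: "(\<lambda>N. real N ^ 3 * (\<epsilon> N * Aa N)) \<longlonglongrightarrow> 0"
    proof (rule sandwich0)
      show "\<forall>\<^sub>F N in sequentially. 0 \<le> real N ^ 3 * (\<epsilon> N * Aa N) \<and>
          real N ^ 3 * (\<epsilon> N * Aa N) \<le> c * Ma^2 * (real N powr (-((\<alpha> - 1) / 2)) * (1 + ln (real N)))"
        using eps_le eventually_gt_at_top[of 0]
      proof eventually_elim
        case (elim N)
        have Aa0: "0 \<le> Aa N" unfolding Aa_def by simp
        have "real N ^ 3 * (\<epsilon> N * Aa N) \<le> real N ^ 3 * ((c * (real N powr (-(2-\<alpha>)) * (1 + ln (real N)))) * Aa N)"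
          using elim Aa0 by (intro mult_left_mono mult_right_mono) auto
        also have "\<dots> = c * Ma^2 * (1 + ln (real N)) * (real N ^ 3 * real N powr (-(2-\<alpha>)) * (real N powr (-sa))^2)"
          unfolding Aa_def by (simp add: power_mult_distrib algebra_simps)
        also have "real N ^ 3 * real N powr (-(2-\<alpha>)) * (real N powr (-sa))^2 = real N powr (-((\<alpha> - 1) / 2))"
        proof -
          have e1: "real N ^ 3 = real N powr 3" using elim by (simp add: powr_numeral)
          have e2: "(real N powr (-sa))^2 = real N powr (2 * (-sa))" using elim by (subst powr_power) auto
          have "real N powr 3 * real N powr (-(2-\<alpha>)) * real N powr (2 * (-sa)) = real N powr (3 + (-(2-\<alpha>)) + 2 * (-sa))"
            by (simp only: powr_add)
          also have "3 + (-(2-\<alpha>)) + 2 * (-sa) = -((\<alpha> - 1) / 2)" unfolding sa_def by (simp add: field_simps)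
          finally show ?thesis unfolding e1 e2 .
        qed
        finally have X: "real N ^ 3 * (\<epsilon> N * Aa N) \<le> c * Ma^2 * (1 + ln (real N)) * real N powr (-((\<alpha> - 1) / 2))" .
        have eqq: "c * Ma^2 * (1 + ln (real N)) * real N powr (-((\<alpha> - 1) / 2)) = c * Ma^2 * (real N powr (-((\<alpha> - 1) / 2)) * (1 + ln (real N)))"
          by (simp only: ac_simps)
        have "0 \<le> real N ^ 3 * (\<epsilon> N * Aa N)" using elim Aa0 by simp
        thus ?case using X eqq by linarith
      qed
      have "(\<lambda>N. c * Ma^2 * (real N powr (-((\<alpha> - 1) / 2)) * (1 + ln (real N)))) \<longlonglongrightarrow> c * Ma^2 * 0"
        using a1 by (intro tendsto_mult tendsto_const lim_pl) auto
      thus "(\<lambda>N. c * Ma^2 * (real N powr (-((\<alpha> - 1) / 2)) * (1 + ln (real N)))) \<longlonglongrightarrow> 0" by simp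
    qed
    have lim: "(\<lambda>N. real N ^ 3 * (\<epsilon> N * Aa N + Ak N)) \<longlonglongrightarrow> 0"
    proof -
      have "(\<lambda>N. real N ^ 3 * (\<epsilon> N * Aa N) + real N ^ 3 * Ak N) \<longlonglongrightarrow> 0 + 0"
        by (intro tendsto_add l1 limk)
      thus ?thesis by (simp add: distrib_left)
    qed
    show ?thesis
      by (rule reduction[OF cden(1) ev_eps cden(2) cls.fin[OF clsa] cls.fin[OF clsk] ev_a ev_k lim])
  next
    case True
    hence a1: "\<alpha> = 1" .
    define C1 where "C1 = 3 * Ba + 2"
    define Aa where "Aa = (\<lambda>N. C1^2 * (256 / (g0a^2 * (real N)^2 * (ln (real N))^2) + real N powr (-(g0a/16)) / (4 * (real N)^2)))"
    have ev_a: "\<forall>\<^sub>F N in sequentially. E (Pi_pmf {..<N} 0 (\<lambda>_. p\<alpha> N)) (hN N) \<le> Aa N"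
      using d(2) ev_real_ge[of "9 / d^2"] eventually_ge_at_top[of 9]
    proof eventually_elim
      case (elim N)
      interpret ca: cls "p\<alpha> N" \<alpha> "\<zeta> N" g\<alpha> f\<alpha> Ba g0a by (rule clsa)
      define m where "m = min N (\<zeta> N)"
      define l' where "l' = ln ((real m + 2) / 3)"
      define A where "A = g0a / 8 * l'"
      have N9: "9 \<le> real N" using elim by simp
      have Npos: "0 < real N" using N9 by simp
      have lnN: "0 < ln (real N)" using N9 by simp
      have sq3: "3 \<le> sqrt (real N)" using N9 real_sqrt_le_mono[of 9 "real N"] by simp
      have sqN: "sqrt (real N) * sqrt (real N) = real N" using Npos by simp
      have m3: "3 * sqrt (real N) \<le> real m"
      proof -
        have "3 * sqrt (real N) \<le> sqrt (real N) * sqrt (real N)" using sq3 by (intro mult_right_mono) auto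
        hence "3 * sqrt (real N) \<le> real N" using sqN by simp
        moreover have "3 * sqrt (real N) \<le> real (\<zeta> N)"
        proof -
          have "sqrt (9 / d^2) \<le> sqrt (real N)" using elim by (intro real_sqrt_le_mono) auto
          moreover have "sqrt (9 / d^2) = 3 / d" using d(1) by (simp add: real_sqrt_divide)
          ultimately have "3 / d \<le> sqrt (real N)" by simp
          hence "3 \<le> d * sqrt (real N)" using d(1) by (simp add: divide_le_eq mult.commute)
          hence "3 * sqrt (real N) \<le> d * sqrt (real N) * sqrt (real N)" by (intro mult_right_mono) auto
          also have "\<dots> = d * real N" using sqN by (simp add: mult.assoc)
          finally show ?thesis using elim by linarith
        qed
        ultimately show ?thesis unfolding m_def by linarith
      qed
      have l'ge: "ln (real N) / 2 \<le> l'"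
      proof -
        have "sqrt (real N) \<le> (real m + 2) / 3" using m3 by simp
        hence "ln (sqrt (real N)) \<le> ln ((real m + 2) / 3)" using Npos by (intro ln_mono) auto
        moreover have "ln (sqrt (real N)) = ln (real N) / 2" using Npos by (simp add: ln_sqrt)
        ultimately show ?thesis unfolding l'_def by simp
      qed
      have l'pos: "0 < l'" using l'ge lnN by linarith
      have Apos: "0 < A" unfolding A_def using g0a(1) l'pos by simp
      have N2: "2 \<le> N" using elim by simp
      have base: "E (Pi_pmf {..<N} 0 (\<lambda>_. p\<alpha> N)) (hN N) \<le> C1^2 * (1 / (real N * A)^2 +
         1 / (4 * (real N)^2) * (exp A * (exp (- (g0a / (2 * real N)) * l')) ^ (N - 2)))"
        using ca.num_a1[OF a1 N2 Apos] unfolding C1_def l'_def m_def .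
      have B1: "1 / (real N * A)^2 \<le> 256 / (g0a^2 * (real N)^2 * (ln (real N))^2)"
      proof -
        have "real N * g0a * ln (real N) / 16 \<le> real N * A"
          unfolding A_def using l'ge Npos g0a(1) by (simp add: field_simps)
        moreover have "0 < real N * g0a * ln (real N) / 16" using Npos g0a(1) lnN by simp
        ultimately have "1 / (real N * A)^2 \<le> 1 / (real N * g0a * ln (real N) / 16)^2"
          using Npos Apos by (intro divide_left_mono power_mono mult_pos_pos) auto
        also have "\<dots> = 256 / (g0a^2 * (real N)^2 * (ln (real N))^2)" by (simp add: power_divide power_mult_distrib)
        finally show ?thesis .
      qed
      have B2: "exp A * (exp (- (g0a / (2 * real N)) * l')) ^ (N - 2) \<le> real N powr (-(g0a/16))"
      proof -
        have "(exp (- (g0a / (2 * real N)) * l')) ^ (N - 2) = exp (real (N - 2) * (- (g0a / (2 * real N)) * l'))"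
          by (rule exp_of_nat_mult[symmetric])
        hence "exp A * (exp (- (g0a / (2 * real N)) * l')) ^ (N - 2) = exp (A + real (N - 2) * (- (g0a / (2 * real N)) * l'))"
          by (simp add: mult_exp_exp)
        also have "A + real (N - 2) * (- (g0a / (2 * real N)) * l') \<le> - (g0a / 16) * ln (real N)"
        proof -
          have q: "1 / 4 \<le> real (N - 2) / (2 * real N)" using N9 N2 by (simp add: field_simps of_nat_diff)
          define T where "T = g0a * l'"
          define W where "W = real (N - 2) / (2 * real N)"
          have T0: "0 \<le> T" unfolding T_def using g0a(1) l'pos by simp
          have e: "real (N - 2) * (- (g0a / (2 * real N)) * l') = - (T * W)"
            unfolding T_def W_def using Npos by (simp add: field_simps)
          have f1: "T * (1/4) \<le> T * W" by (rule mult_left_mono[OF q[folded W_def] T0])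
          have f2: "(g0a / 16) * ln (real N) \<le> T / 8"
          proof -
            have "g0a * (ln (real N) / 2) \<le> g0a * l'" using l'ge g0a(1) by (intro mult_left_mono) auto
            thus ?thesis unfolding T_def by simp
          qed
          have "A = T / 8" unfolding A_def T_def by simp
          thus ?thesis unfolding e using f1 f2 by linarith
        qed
        hence "exp (A + real (N - 2) * (- (g0a / (2 * real N)) * l')) \<le> exp (- (g0a / 16) * ln (real N))" by simp
        also have "\<dots> = real N powr (-(g0a/16))" using Npos by (simp add: powr_def)
        finally show ?thesis .
      qed
      have "1 / (4 * (real N)^2) * (exp A * (exp (- (g0a / (2 * real N)) * l')) ^ (N - 2)) \<le> 1 / (4 * (real N)^2) * real N powr (-(g0a/16))"
        using B2 by (intro mult_left_mono) auto
      hence "1 / (real N * A)^2 + 1 / (4 * (real N)^2) * (exp A * (exp (- (g0a / (2 * real N)) * l')) ^ (N - 2))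
          \<le> 256 / (g0a^2 * (real N)^2 * (ln (real N))^2) + real N powr (-(g0a/16)) / (4 * (real N)^2)"
        using B1 by simp
      hence "C1^2 * (1 / (real N * A)^2 + 1 / (4 * (real N)^2) * (exp A * (exp (- (g0a / (2 * real N)) * l')) ^ (N - 2)))
          \<le> C1^2 * (256 / (g0a^2 * (real N)^2 * (ln (real N))^2) + real N powr (-(g0a/16)) / (4 * (real N)^2))"
        by (intro mult_left_mono) auto
      thus ?case using base unfolding Aa_def by linarith
    qed
    have l1: "(\<lambda>N. real N ^ 3 * (\<epsilon> N * Aa N)) \<longlonglongrightarrow> 0"
    proof (rule sandwich0)
      show "\<forall>\<^sub>F N in sequentially. 0 \<le> real N ^ 3 * (\<epsilon> N * Aa N) \<and>
          real N ^ 3 * (\<epsilon> N * Aa N) \<le> c * C1^2 * ((256 / g0a^2) * ((1 + ln (real N)) / (ln (real N))^2) + (1/4) * (real N powr (-(g0a/16)) * (1 + ln (real N))))"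
        using eps_le eventually_gt_at_top[of 1]
      proof eventually_elim
        case (elim N)
        have Npos: "0 < real N" using elim by simp
        have lnN: "0 < ln (real N)" using elim by simp
        have Aa0: "0 \<le> Aa N" unfolding Aa_def by simp
        have "real N ^ 3 * (\<epsilon> N * Aa N) \<le> real N ^ 3 * ((c * (real N powr (-(2-\<alpha>)) * (1 + ln (real N)))) * Aa N)"
          using elim Aa0 by (intro mult_left_mono mult_right_mono) auto
        also have "real N powr (-(2-\<alpha>)) = 1 / real N" using a1 Npos by (simp add: powr_minus_divide)
        also have "real N ^ 3 * ((c * (1 / real N * (1 + ln (real N)))) * Aa N) =
            c * C1^2 * ((256 / g0a^2) * ((1 + ln (real N)) / (ln (real N))^2) + (1/4) * (real N powr (-(g0a/16)) * (1 + ln (real N))))"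
          unfolding Aa_def using Npos lnN g0a(1) by (simp add: field_simps power2_eq_square power3_eq_cube)
        finally show ?case using elim Aa0 by simp
      qed
      have "(\<lambda>N. c * C1^2 * ((256 / g0a^2) * ((1 + ln (real N)) / (ln (real N))^2) + (1/4) * (real N powr (-(g0a/16)) * (1 + ln (real N)))))
          \<longlonglongrightarrow> c * C1^2 * ((256 / g0a^2) * 0 + (1/4) * 0)"
        using g0a(1) by (intro tendsto_mult tendsto_add tendsto_const lim_a1 lim_pl) auto
      thus "(\<lambda>N. c * C1^2 * ((256 / g0a^2) * ((1 + ln (real N)) / (ln (real N))^2) + (1/4) * (real N powr (-(g0a/16)) * (1 + ln (real N))))) \<longlonglongrightarrow> 0"
        by simp
    qed
    have lim: "(\<lambda>N. real N ^ 3 * (\<epsilon> N * Aa N + Ak N)) \<longlonglongrightarrow> 0"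
    proof -
      have "(\<lambda>N. real N ^ 3 * (\<epsilon> N * Aa N) + real N ^ 3 * Ak N) \<longlonglongrightarrow> 0 + 0"
        by (intro tendsto_add l1 limk)
      thus ?thesis by (simp add: distrib_left)
    qed
    show ?thesis
      by (rule reduction[OF cden(1) ev_eps cden(2) cls.fin[OF clsa] cls.fin[OF clsk] ev_a ev_k lim])
  qed
qed


end
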